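(* Let $1<p<q<\infty$ and $\alpha>0$. Let $\psi(t)=t^{\frac1p-\frac1q}(1-\log t)^{-\frac{\alpha}{p}}$, $t\in(0,1)$ (a strictly increasing bijection of $(0,1)$ onto itself), and let $\varphi$ be its inverse, so $t=\varphi(t)^{\frac1p-\frac1q}(1-\log\varphi(t))^{-\frac{\alpha}{p}}$. Then, with constants independent of $f$ and $t$, for all $f\in L^{p),\alpha}(\Omega)+L^q(\Omega)$ and all $t\in(0,1)$, $$K\bigl(f,t;L^{p),\alpha},L^q\bigr)\approx\sup_{0<s<\varphi(t)}(1-\log s)^{-\frac{\alpha}{p}}\Bigl(\int_s^{\varphi(t)}f_*^p(x)\,dx\Bigr)^{1/p}+t\Bigl(\int_{\varphi(t)}^1 f_*^q(s)\,ds\Bigr)^{1/q}.$$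
   Context: $\Omega\subset\mathbb R^n$ is a bounded open set with $|\Omega|=1$; $f_*$ is the decreasing rearrangement of $|f|$ on $(0,1)$; $\log$ is the natural logarithm. Grand Lebesgue space: $L^{p),\alpha}(\Omega)$ is the set of measurable $f$ with $\|f\|_{p),\alpha}=\sup_{0<t<1}(1-\log t)^{-\alpha/p}(\int_t^1 f_*^p)^{1/p}<\infty$. K-functional: $K(g,t;X_0,X_1)=\inf_{g=g_0+g_1}(\|g_0\|_{X_0}+t\|g_1\|_{X_1})$. $A\approx B$ means $c^{-1}B\le A\le cB$ with $c$ independent of the indicated variables. *)

theory Defs
  imports "HOL-Analysis.Analysis"
begin

definition meas_on :: "'a::euclidean_space set \<Rightarrow> ('a \<Rightarrow> real) \<Rightarrow> bool" where
  "meas_on \<Omega> f \<longleftrightarrow> set_borel_measurable lebesgue \<Omega> f"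

definition rearr :: "'a::euclidean_space set \<Rightarrow> ('a \<Rightarrow> real) \<Rightarrow> real \<Rightarrow> real" where
  "rearr \<Omega> f t = Inf {y. 0 \<le> y \<and> emeasure lebesgue {x\<in>\<Omega>. y < \<bar>f x\<bar>} \<le> ennreal t}"

definition gl_fun :: "'a::euclidean_space set \<Rightarrow> real \<Rightarrow> real \<Rightarrow> ('a \<Rightarrow> real) \<Rightarrow> real \<Rightarrow> real" where
  "gl_fun \<Omega> p \<alpha> f t = (1 - ln t) powr (- \<alpha> / p) *
     (LINT x:{t..1}|lborel. rearr \<Omega> f x powr p) powr (1 / p)"

definition gl_norm :: "'a::euclidean_space set \<Rightarrow> real \<Rightarrow> real \<Rightarrow> ('a \<Rightarrow> real) \<Rightarrow> real" where
  "gl_norm \<Omega> p \<alpha> f = (SUP t\<in>{0<..<1}. gl_fun \<Omega> p \<alpha> f t)"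

definition GL :: "'a::euclidean_space set \<Rightarrow> real \<Rightarrow> real \<Rightarrow> ('a \<Rightarrow> real) set" where
  "GL \<Omega> p \<alpha> = {f. meas_on \<Omega> f \<and> bdd_above (gl_fun \<Omega> p \<alpha> f ` {0<..<1})}"

definition Lq :: "'a::euclidean_space set \<Rightarrow> real \<Rightarrow> ('a \<Rightarrow> real) set" where
  "Lq \<Omega> q = {f. meas_on \<Omega> f \<and> set_integrable lebesgue \<Omega> (\<lambda>x. \<bar>f x\<bar> powr q)}"

definition Lq_norm :: "'a::euclidean_space set \<Rightarrow> real \<Rightarrow> ('a \<Rightarrow> real) \<Rightarrow> real" where
  "Lq_norm \<Omega> q f = (LINT x:\<Omega>|lebesgue. \<bar>f x\<bar> powr q) powr (1 / q)"

definition decomps :: "'a::euclidean_space set \<Rightarrow> real \<Rightarrow> real \<Rightarrow> real \<Rightarrow> ('a \<Rightarrow> real)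
     \<Rightarrow> (('a \<Rightarrow> real) \<times> ('a \<Rightarrow> real)) set" where
  "decomps \<Omega> p \<alpha> q f = {(g0, g1). g0 \<in> GL \<Omega> p \<alpha> \<and> g1 \<in> Lq \<Omega> q \<and> (\<forall>x\<in>\<Omega>. f x = g0 x + g1 x)}"

definition GL_plus_Lq :: "'a::euclidean_space set \<Rightarrow> real \<Rightarrow> real \<Rightarrow> real \<Rightarrow> ('a \<Rightarrow> real) set" where
  "GL_plus_Lq \<Omega> p \<alpha> q = {f. decomps \<Omega> p \<alpha> q f \<noteq> {}}"

definition Kfun :: "'a::euclidean_space set \<Rightarrow> real \<Rightarrow> real \<Rightarrow> real \<Rightarrow> ('a \<Rightarrow> real) \<Rightarrow> real \<Rightarrow> real" where
  "Kfun \<Omega> p \<alpha> q f t = (INF g\<in>decomps \<Omega> p \<alpha> q f. gl_norm \<Omega> p \<alpha> (fst g) + t * Lq_norm \<Omega> q (snd g))"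

definition psi :: "real \<Rightarrow> real \<Rightarrow> real \<Rightarrow> real \<Rightarrow> real" where
  "psi p q \<alpha> t = t powr (1/p - 1/q) * (1 - ln t) powr (- \<alpha> / p)"

definition phi :: "real \<Rightarrow> real \<Rightarrow> real \<Rightarrow> real \<Rightarrow> real" where
  "phi p q \<alpha> t = (THE s. s \<in> {0<..<1} \<and> psi p q \<alpha> s = t)"

end

theory Submission imports Defs begin


lemma powr_le_iff2:
  fixes l y q :: real
  assumes "0 < l" "0 < q" "0 \<le> y"
  shows "l \<le> y \<longleftrightarrow> l powr q \<le> y powr q"
proof
  assume "l \<le> y" thus "l powr q \<le> y powr q" using assms by (intro powr_mono2) auto
next
  assume a: "l powr q \<le> y powr q"
  show "l \<le> y"
  proof (rule ccontr)
    assume "\<not> l \<le> y"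
    hence "y powr q < l powr q" using assms by (intro powr_less_mono2) auto
    with a show False by simp
  qed
qed

section \<open>Interval integrals\<close>

lemma set_int_nonneg:
  fixes f :: "'b \<Rightarrow> real"
  assumes "\<And>x. x \<in> A \<Longrightarrow> 0 \<le> f x"
  shows "0 \<le> (LINT x:A|M. f x)"
  unfolding set_lebesgue_integral_def using assms
  by (intro Bochner_Integration.integral_nonneg) (auto simp: indicator_def)

lemma si_anti:
  fixes h :: "real \<Rightarrow> real"
  assumes "\<And>x y. u \<le> x \<Longrightarrow> x \<le> y \<Longrightarrow> y \<le> v \<Longrightarrow> h y \<le> h x"
  shows "set_integrable lborel {u..v} h"
proof -
  have "mono_on {u..v} (\<lambda>x. - h x)" using assms by (auto simp: mono_on_def)
  hence "(\<lambda>x. - h x) \<in> borel_measurable (restrict_space borel {u..v})" by (rule borel_measurable_mono_on_fnc)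
  hence "(\<lambda>x. - (- h x)) \<in> borel_measurable (restrict_space borel {u..v})" by measurable
  hence m: "h \<in> borel_measurable (restrict_space borel {u..v})" by simp
  have "(\<lambda>x. indicator {u..v} x *\<^sub>R h x) \<in> borel_measurable borel"
    using m by (subst (asm) borel_measurable_restrict_space_iff) auto
  hence m2: "(\<lambda>x. indicator {u..v} x *\<^sub>R h x) \<in> borel_measurable lborel" by simp
  have bnd: "norm (indicator {u..v} x *\<^sub>R h x) \<le> \<bar>h u\<bar> + \<bar>h v\<bar>" if "x \<in> {u..v}" for x
  proof -
    have "h x \<le> h u" "h v \<le> h x" using assms that by auto
    thus ?thesis using that by auto
  qed
  show ?thesis unfolding set_integrable_def
    by (rule integrableI_bounded_set[where A="{u..v}" and B="\<bar>h u\<bar> + \<bar>h v\<bar>"]) (use m2 bnd in \<open>auto simp: emeasure_lborel_Icc_eq\<close>)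
qed

lemma si_split:
  fixes h :: "real \<Rightarrow> real"
  assumes "u \<le> v" "v \<le> w" "set_integrable lborel {u..w} h"
  shows "(LINT x:{u..w}|lborel. h x) = (LINT x:{u..v}|lborel. h x) + (LINT x:{v..w}|lborel. h x)"
proof -
  have e: "{u..w} = {u..v} \<union> {v..w}" using assms by auto
  show ?thesis unfolding e
  proof (rule set_integral_Un_AE)
    show "AE x in lborel. \<not> (x \<in> {u..v} \<and> x \<in> {v..w})"
      using AE_lborel_singleton[of v] by eventually_elim auto
    show "set_integrable lborel {u..v} h" using assms by (intro set_integrable_subset[OF assms(3)]) auto
    show "set_integrable lborel {v..w} h" using assms by (intro set_integrable_subset[OF assms(3)]) auto
  qed auto
qed

lemma si_scale:
  fixes h :: "real \<Rightarrow> real"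
  shows "(LINT x:{u..v}|lborel. h (x/2)) = 2 * (LINT x:{u/2..v/2}|lborel. h x)"
proof -
  have "(LINT x:{u/2..v/2}|lborel. h x) = (\<integral>x. indicator {u/2..v/2} x *\<^sub>R h x \<partial>lborel)"
    unfolding set_lebesgue_integral_def ..
  also have "\<dots> = \<bar>1/2\<bar> *\<^sub>R (\<integral>x. indicator {u/2..v/2} (0 + 1/2 * x) *\<^sub>R h (0 + 1/2 * x) \<partial>lborel)"
    by (rule lborel_integral_real_affine) simp
  also have "(\<lambda>x. indicator {u/2..v/2} (0 + 1/2 * x) *\<^sub>R h (0 + 1/2 * x)) = (\<lambda>x::real. indicator {u..v} x *\<^sub>R h (x/2))"
    by (auto simp: indicator_def fun_eq_iff)
  finally show ?thesis unfolding set_lebesgue_integral_def by simp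
qed

lemma si_const:
  assumes "u \<le> v"
  shows "(LINT x:{u..v}|lborel. (c::real)) = (v - u) * c"
  using assms by (subst set_integral_const) auto

lemma si_nonneg:
  fixes h :: "real \<Rightarrow> real"
  assumes "\<And>x. u \<le> x \<Longrightarrow> x \<le> v \<Longrightarrow> 0 \<le> h x"
  shows "0 \<le> (LINT x:{u..v}|lborel. h x)"
  using assms by (intro set_int_nonneg) auto

lemma si_mono:
  fixes h k :: "real \<Rightarrow> real"
  assumes "set_integrable lborel {u..v} h" "set_integrable lborel {u..v} k"
    "\<And>x. u \<le> x \<Longrightarrow> x \<le> v \<Longrightarrow> h x \<le> k x"
  shows "(LINT x:{u..v}|lborel. h x) \<le> (LINT x:{u..v}|lborel. k x)"
  using assms by (intro set_integral_mono) auto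

lemma si_sub:
  fixes h :: "real \<Rightarrow> real"
  assumes "u' \<le> u" "u \<le> v" "v \<le> v'" "set_integrable lborel {u'..v'} h"
    "\<And>x. u' \<le> x \<Longrightarrow> x \<le> v' \<Longrightarrow> 0 \<le> h x"
  shows "(LINT x:{u..v}|lborel. h x) \<le> (LINT x:{u'..v'}|lborel. h x)"
proof -
  have i1: "set_integrable lborel {u..v'} h" using assms by (intro set_integrable_subset[OF assms(4)]) auto
  have "(LINT x:{u'..v'}|lborel. h x) = (LINT x:{u'..u}|lborel. h x) + (LINT x:{u..v'}|lborel. h x)"
    using assms by (intro si_split) auto
  moreover have "(LINT x:{u..v'}|lborel. h x) = (LINT x:{u..v}|lborel. h x) + (LINT x:{v..v'}|lborel. h x)"
    using assms i1 by (intro si_split) auto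
  moreover have "0 \<le> (LINT x:{u'..u}|lborel. h x)" "0 \<le> (LINT x:{v..v'}|lborel. h x)"
    using assms by (auto intro!: si_nonneg)
  ultimately show ?thesis by linarith
qed

lemma si_pow:
  fixes r :: real
  assumes "0 < u" "u \<le> v" "r \<noteq> 1"
  shows "(LINT x:{u..v}|lborel. x powr (-r)) = (v powr (1-r) - u powr (1-r)) / (1-r)"
proof -
  have "(LINT x:{u..v}|lborel. x powr (-r)) = (\<integral>x. indicator {u..v} x *\<^sub>R (x powr (-r)) \<partial>lborel)"
    unfolding set_lebesgue_integral_def ..
  also have "\<dots> = v powr (1-r) / (1-r) - u powr (1-r) / (1-r)"
  proof (rule integral_FTC_atLeastAtMost[OF assms(2)])
    fix x assume x: "u \<le> x" "x \<le> v"
    hence "0 < x" using assms by simp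
    have "((\<lambda>z. z powr (1-r) / (1-r)) has_real_derivative ((1-r) * x powr (1-r-1)) / (1-r)) (at x)"
      by (rule DERIV_cdivide[OF has_real_derivative_powr[OF \<open>0<x\<close>]])
    moreover have "((1-r) * x powr (1-r-1)) / (1-r) = x powr (-r)" using assms by simp
    ultimately show "((\<lambda>z. z powr (1-r) / (1-r)) has_vector_derivative x powr (-r)) (at x within {u..v})"
      by (simp add: has_real_derivative_iff_has_vector_derivative[symmetric] has_field_derivative_at_within)
  next
    show "continuous_on {u..v} (\<lambda>x. x powr (-r))" using assms by (intro continuous_intros) auto
  qed
  finally show ?thesis by (simp add: diff_divide_distrib)
qed



lemma sum_powr:
  fixes a b p :: real
  assumes "0 \<le> a" "0 \<le> b" "0 < p"
  shows "(a + b) powr p \<le> 2 powr p * (a powr p + b powr p)"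
proof -
  have "(a + b) powr p \<le> (2 * max a b) powr p" using assms by (intro powr_mono2) auto
  also have "\<dots> = 2 powr p * (max a b) powr p" by (simp add: powr_mult)
  also have "(max a b) powr p \<le> a powr p + b powr p" using assms by (auto simp: max_def)
  hence "2 powr p * (max a b) powr p \<le> 2 powr p * (a powr p + b powr p)" by simp
  finally show ?thesis .
qed

lemma root_bound:
  fixes L X K e c :: real
  assumes "0 < L" "0 \<le> X" "0 \<le> K" "0 < e" "L powr (c * e) * X \<le> K powr e"
  shows "L powr c * X powr (1/e) \<le> K"
proof -
  have "(L powr (c * e) * X) powr (1/e) \<le> (K powr e) powr (1/e)"
    using assms by (intro powr_mono2) auto
  moreover have "(L powr (c * e) * X) powr (1/e) = L powr c * X powr (1/e)"
    using assms by (simp add: powr_mult powr_powr)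
  moreover have "(K powr e) powr (1/e) = K" using assms by (simp add: powr_powr)
  ultimately show ?thesis by simp
qed

lemma ln_half_bound:
  fixes s c :: real
  assumes "0 < s" "s \<le> 1" "1 \<le> c"
  shows "1 - ln (s / c) \<le> (1 + ln c) * (1 - ln s)"
proof -
  have "ln (s / c) = ln s - ln c" using assms by (simp add: ln_divide_pos)
  moreover have "ln s \<le> 0" using assms by simp
  moreover have "0 \<le> ln c" using assms by simp
  ultimately have "1 - ln (s/c) = (1 - ln s) + ln c * 1" by simp
  also have "\<dots> \<le> (1 - ln s) + ln c * (1 - ln s)"
    using \<open>ln s \<le> 0\<close> \<open>0 \<le> ln c\<close> by (intro add_left_mono mult_left_mono) auto
  finally show ?thesis by (simp add: algebra_simps)
qed


lemma powr_ratio: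
  fixes L M c a :: real
  assumes "0 < L" "0 \<le> M" "M \<le> c * L" "0 \<le> c" "0 \<le> a"
  shows "L powr (-a) * M powr a \<le> c powr a"
proof -
  have "M powr a \<le> (c * L) powr a" using assms by (intro powr_mono2) auto
  hence "L powr (-a) * M powr a \<le> L powr (-a) * (c powr a * L powr a)"
    by (simp add: powr_mult mult_left_mono)
  also have "\<dots> = c powr a * (L powr (-a) * L powr a)" by (simp add: ac_simps)
  also have "L powr (-a) * L powr a = 1" using assms by (simp add: powr_add[symmetric])
  finally show ?thesis by simp
qed

lemma t_powr:
  fixes p q \<alpha> \<phi> t e :: real
  assumes "0 < \<phi>" "\<phi> < 1" "t = \<phi> powr (1/p-1/q) * (1 - ln \<phi>) powr (-\<alpha>/p)" "0 < p"
  shows "t powr e = \<phi> powr ((1/p-1/q) * e) * (1 - ln \<phi>) powr (-\<alpha>/p*e)"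
  using assms by (simp add: powr_mult powr_powr)


lemma set_integral_nn:
  fixes h :: "'b \<Rightarrow> real"
  assumes "set_integrable M A h" "\<And>x. x \<in> A \<Longrightarrow> 0 \<le> h x"
  shows "ennreal (LINT x:A|M. h x) = (\<integral>\<^sup>+x. ennreal (h x) * indicator A x \<partial>M)"
proof -
  have AE: "AE x in M. 0 \<le> h x * indicator A x" using assms(2) by (auto simp: indicator_def)
  show ?thesis
    unfolding set_lebesgue_integral_def nn_integral_set_ennreal using assms(1) AE
    by (subst nn_integral_eq_integral) (simp_all add: mult_ac set_integrable_def)
qed


lemma si_meas_nn:
  fixes h :: "'b \<Rightarrow> real"
  assumes "set_integrable M A h"
  shows "(\<lambda>x. ennreal (h x) * indicator A x) \<in> borel_measurable M"
proof -
  have "(\<lambda>x. indicator A x *\<^sub>R h x) \<in> borel_measurable M"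
    using assms unfolding set_integrable_def by (rule borel_measurable_integrable)
  hence "(\<lambda>x. ennreal (indicator A x *\<^sub>R h x)) \<in> borel_measurable M" by measurable
  moreover have "(\<lambda>x. ennreal (indicator A x *\<^sub>R h x)) = (\<lambda>x. ennreal (h x) * indicator A x)"
    by (auto simp: indicator_def fun_eq_iff)
  ultimately show ?thesis by simp
qed

lemma root_sum:
  fixes a b q :: real
  assumes "0 \<le> a" "0 \<le> b" "1 \<le> q"
  shows "(a + b) powr (1/q) \<le> 2 * (a powr (1/q) + b powr (1/q))"
proof -
  have "(a + b) powr (1/q) \<le> (2 * max a b) powr (1/q)" using assms by (intro powr_mono2) auto
  also have "\<dots> = 2 powr (1/q) * (max a b) powr (1/q)" by (simp add: powr_mult)
  also have "2 powr (1/q) \<le> 2 powr 1" using assms by (intro powr_mono) auto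
  hence "2 powr (1/q) * (max a b) powr (1/q) \<le> 2 * (max a b) powr (1/q)" by (simp add: mult_right_mono)
  also have "(max a b) powr (1/q) \<le> a powr (1/q) + b powr (1/q)" using assms by (auto simp: max_def)
  finally show ?thesis by simp
qed

section \<open>psi and phi\<close>

lemma aux_inv: "(d::real) \<noteq> 0 \<Longrightarrow> 1/d * d = 1" by simp

lemma ln_pos1: "0 < (x::real) \<Longrightarrow> x \<le> 1 \<Longrightarrow> 0 < 1 - ln x"
proof -
  assume "0 < x" "x \<le> 1"
  hence "ln x \<le> 0" by simp
  thus ?thesis by simp
qed

lemma psi_strict:
  assumes a: "0 < 1/p - 1/q" and b: "0 < \<alpha>/p" and x: "0 < x" "x < y" "y \<le> 1"
  shows "psi p q \<alpha> x < psi p q \<alpha> y"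
proof -
  have l: "1 - ln y < 1 - ln x" using x by simp
  have "ln y \<le> 0" using x by simp
  hence ly: "0 < 1 - ln y" by simp
  have A: "x powr (1/p - 1/q) < y powr (1/p - 1/q)" using a x by (intro powr_less_mono2) auto
  have B: "(1 - ln x) powr (- \<alpha> / p) < (1 - ln y) powr (- \<alpha> / p)"
    using b l ly by (intro powr_less_mono2_neg) auto
  have "psi p q \<alpha> x = x powr (1/p - 1/q) * (1 - ln x) powr (- \<alpha> / p)" unfolding psi_def ..
  also have "\<dots> < y powr (1/p - 1/q) * (1 - ln y) powr (- \<alpha> / p)"
    using A B x ly by (intro mult_strict_mono) auto
  finally show ?thesis unfolding psi_def .
qed

lemma phi_props:
  assumes a: "0 < 1/p - 1/q" and b: "0 < \<alpha>/p" and t: "0 < t" "t < 1"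
  shows "phi p q \<alpha> t \<in> {0<..<1}" "psi p q \<alpha> (phi p q \<alpha> t) = t"
proof -
  define x0 where "x0 = t powr (1 / (1/p - 1/q))"
  have e: "0 < 1/(1/p-1/q)" using a by simp
  have x0: "0 < x0" "x0 < 1" unfolding x0_def using t powr_less_mono2[OF e, of t 1] by auto
  have "psi p q \<alpha> x0 = t * (1 - ln x0) powr (- \<alpha> / p)"
  proof -
    have "1/(1/p-1/q) * (1/p-1/q) = 1" using aux_inv[of "1/p-1/q"] a by linarith
    hence "x0 powr (1/p-1/q) = t" unfolding x0_def using t by (simp add: powr_powr)
    thus ?thesis unfolding psi_def by simp
  qed
  also have "(1 - ln x0) powr (- \<alpha> / p) < 1"
    using x0 b by (intro powr_less_one) auto
  hence "t * (1 - ln x0) powr (- \<alpha> / p) < t" using t by simp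
  finally have p0: "psi p q \<alpha> x0 < t" .
  have p1: "psi p q \<alpha> 1 = 1" unfolding psi_def by simp
  have cont: "continuous_on {x0..1} (psi p q \<alpha>)"
  proof -
    have "\<forall>x\<in>{x0..1}. 0 < x \<and> 0 < 1 - ln x" using x0 ln_pos1 by auto
    thus ?thesis unfolding psi_def by (intro continuous_intros) auto
  qed
  have "\<exists>s. x0 \<le> s \<and> s \<le> 1 \<and> psi p q \<alpha> s = t"
    by (rule IVT'[of "psi p q \<alpha>" x0 t 1, OF less_imp_le[OF p0] _ _ cont]) (use p1 t x0 in simp_all)
  then obtain s where s: "s \<in> {x0..1}" "psi p q \<alpha> s = t" by auto
  have "s \<noteq> 1" using s(2) p1 t by auto
  hence s01: "s \<in> {0<..<1}" using s(1) x0 by auto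
  have uniq: "r = s" if r: "r \<in> {0<..<1}" "psi p q \<alpha> r = t" for r
  proof (rule ccontr)
    assume "r \<noteq> s"
    hence "r < s \<or> s < r" by linarith
    moreover
    { assume "r < s"
      hence "psi p q \<alpha> r < psi p q \<alpha> s" using r(1) s01 by (intro psi_strict[OF a b]) auto
      hence False using r(2) s(2) by simp }
    moreover
    { assume "s < r"
      hence "psi p q \<alpha> s < psi p q \<alpha> r" using r(1) s01 by (intro psi_strict[OF a b]) auto
      hence False using r(2) s(2) by simp }
    ultimately show False by blast
  qed
  have "phi p q \<alpha> t = s" unfolding phi_def
    by (rule the_equality) (use s(2) s01 uniq in blast)+
  thus "phi p q \<alpha> t \<in> {0<..<1}" "psi p q \<alpha> (phi p q \<alpha> t) = t" using s(2) s01 by simp_all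
qed

definition CA :: "real \<Rightarrow> real \<Rightarrow> real \<Rightarrow> real" where
  "CA p q \<alpha> = (2 powr (p+1) * (1 + ln 2) powr \<alpha> + 2 powr p * 2 powr (p/q) / (1 - p/q)) powr (1/p)"

definition CB :: "real \<Rightarrow> real \<Rightarrow> real \<Rightarrow> real" where
  "CB p q \<alpha> = (2 powr (q+1) * 4 powr ((q-p)/p) * (1 + ln 4) powr (\<alpha>*q/p) + 2 powr (q+1)) powr (1/q)"

definition CU :: "real \<Rightarrow> real \<Rightarrow> real" where
  "CU p \<alpha> = 3 + 2 * (2 powr (1/p) * (1 + ln 2) powr (\<alpha>/p))"

locale om =
  fixes \<Omega> :: "'a::euclidean_space set"
  assumes \<Omega>m: "\<Omega> \<in> sets lebesgue" and \<Omega>1: "emeasure lebesgue \<Omega> = 1"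
begin

definition Dm :: "('a \<Rightarrow> real) \<Rightarrow> real \<Rightarrow> ennreal" where
  "Dm g y = emeasure lebesgue {x\<in>\<Omega>. y < \<bar>g x\<bar>}"

lemma meas_ind: "meas_on \<Omega> g \<Longrightarrow> (\<lambda>x. indicator \<Omega> x * g x) \<in> borel_measurable lebesgue"
  unfolding meas_on_def set_borel_measurable_def by simp

lemma sets_lev: assumes "meas_on \<Omega> g" shows "{x\<in>\<Omega>. y < \<bar>g x\<bar>} \<in> sets lebesgue"
proof -
  have m: "(\<lambda>x. indicator \<Omega> x * g x) \<in> borel_measurable lebesgue" using meas_ind[OF assms] .
  have "{x \<in> space lebesgue. y < \<bar>indicator \<Omega> x * g x\<bar>} \<in> sets lebesgue"
    using m by measurable
  hence "\<Omega> \<inter> {x \<in> space lebesgue. y < \<bar>indicator \<Omega> x * g x\<bar>} \<in> sets lebesgue"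
    using \<Omega>m by blast
  moreover have "\<Omega> \<inter> {x \<in> space lebesgue. y < \<bar>indicator \<Omega> x * g x\<bar>} = {x\<in>\<Omega>. y < \<bar>g x\<bar>}"
    by (auto simp: indicator_def)
  ultimately show ?thesis by simp
qed

lemma Dm_le1: "Dm g y \<le> 1"
proof -
  have "emeasure lebesgue {x\<in>\<Omega>. y < \<bar>g x\<bar>} \<le> emeasure lebesgue \<Omega>"
    by (rule emeasure_mono) (auto simp: \<Omega>m)
  thus ?thesis unfolding Dm_def \<Omega>1 .
qed

lemma Dm_fin: "Dm g y < \<infinity>"
  using order.strict_trans1[OF Dm_le1[of g y] ennreal_one_less_top] by simp

lemma Dm_anti: assumes "meas_on \<Omega> g" "y \<le> z" shows "Dm g z \<le> Dm g y"
  unfolding Dm_def using assms by (intro emeasure_mono sets_lev) auto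

lemma Dm_ne: assumes "meas_on \<Omega> g" "0 < x" shows "\<exists>y\<ge>0. Dm g y \<le> ennreal x"
proof -
  let ?A = "\<lambda>n::nat. {z\<in>\<Omega>. real n < \<bar>g z\<bar>}"
  have dec: "decseq ?A" by (auto simp: decseq_def)
  have "(INF n. emeasure lebesgue (?A n)) = emeasure lebesgue (\<Inter>n. ?A n)"
  proof (rule INF_emeasure_decseq[OF _ dec])
    show "range ?A \<subseteq> sets lebesgue" using sets_lev[OF assms(1)] by blast
    fix n show "emeasure lebesgue (?A n) \<noteq> \<infinity>"
      using Dm_fin[of g "real n", unfolded Dm_def] by (simp only: less_top[symmetric])
  qed
  also have "(\<Inter>n. ?A n) = {}"
  proof -
    { fix z assume z: "z \<in> (\<Inter>n. ?A n)"
      obtain n where n: "\<bar>g z\<bar> < real n" using reals_Archimedean2 by blast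
      from z have "z \<in> ?A n" by blast
      hence "real n < \<bar>g z\<bar>" by simp
      with n have False by simp }
    thus ?thesis by blast
  qed
  finally have "(INF n. emeasure lebesgue (?A n)) = 0" by simp
  hence "(INF n. emeasure lebesgue (?A n)) < ennreal x" using assms by simp
  then obtain n where "emeasure lebesgue (?A n) < ennreal x" by (auto simp: INF_less_iff)
  thus ?thesis unfolding Dm_def by (intro exI[of _ "real n"]) auto
qed

lemma rearr_eq: "rearr \<Omega> g x = Inf {y. 0 \<le> y \<and> Dm g y \<le> ennreal x}"
  unfolding rearr_def Dm_def ..

lemma rearr_nonneg: assumes "meas_on \<Omega> g" "0 < x" shows "0 \<le> rearr \<Omega> g x"
  unfolding rearr_eq using Dm_ne[OF assms] by (intro cInf_greatest) auto

lemma rearr_lower: assumes "meas_on \<Omega> g" "0 \<le> y" "Dm g y \<le> ennreal x" shows "rearr \<Omega> g x \<le> y"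
  unfolding rearr_eq using assms by (intro cInf_lower) (auto intro: bdd_belowI[of _ 0])

lemma rearr_attain: assumes g: "meas_on \<Omega> g" and x: "0 < x" shows "Dm g (rearr \<Omega> g x) \<le> ennreal x"
proof -
  define a where "a = rearr \<Omega> g x"
  let ?S = "{y. 0 \<le> y \<and> Dm g y \<le> ennreal x}"
  have ne: "?S \<noteq> {}" using Dm_ne[OF g x] by auto
  have inS: "a + 1 / Suc n \<in> ?S" for n
  proof -
    have "a < a + 1/Suc n" by simp
    then obtain y where y: "y \<in> ?S" "y < a + 1/Suc n"
      unfolding a_def rearr_eq using ne by (subst (asm) cInf_less_iff) (auto intro: bdd_belowI[of _ 0])
    have "0 \<le> a" unfolding a_def using rearr_nonneg[OF g x] .
    moreover have "Dm g (a + 1/Suc n) \<le> Dm g y" using y by (intro Dm_anti[OF g]) auto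
    ultimately show ?thesis using y by auto
  qed
  let ?A = "\<lambda>n::nat. {z\<in>\<Omega>. a + 1/Suc n < \<bar>g z\<bar>}"
  have inc: "incseq ?A"
  proof (rule incseq_SucI)
    fix n
    have "1 / real (Suc (Suc n)) \<le> 1 / Suc n" by (simp add: frac_le)
    thus "?A n \<subseteq> ?A (Suc n)" by auto
  qed
  have un: "(\<Union>n. ?A n) = {z\<in>\<Omega>. a < \<bar>g z\<bar>}"
  proof (auto)
    fix z assume z: "z \<in> \<Omega>" "a < \<bar>g z\<bar>"
    then obtain n where "1 / Suc n < \<bar>g z\<bar> - a"
      by (metis diff_gt_0_iff_gt nat_approx_posE)
    thus "\<exists>n. a + 1 / (1 + real n) < \<bar>g z\<bar>" by (intro exI[of _ n]) (simp add: add.commute)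
  next
    fix z n assume "a + 1 / (1 + real n) < \<bar>g z\<bar>"
    moreover have "0 < 1 / (1 + real n)" by simp
    ultimately show "a < \<bar>g z\<bar>" by linarith
  qed
  have "(SUP n. emeasure lebesgue (?A n)) = emeasure lebesgue (\<Union>n. ?A n)"
    using inc sets_lev[OF g] by (intro SUP_emeasure_incseq) auto
  moreover have "(SUP n. emeasure lebesgue (?A n)) \<le> ennreal x"
    using inS unfolding Dm_def by (intro SUP_least) blast
  ultimately have "emeasure lebesgue {z\<in>\<Omega>. a < \<bar>g z\<bar>} \<le> ennreal x" by (simp only: un)
  thus ?thesis unfolding Dm_def a_def .
qed

lemma rearr_char: assumes g: "meas_on \<Omega> g" and x: "0 < x" and l: "0 \<le> l"
  shows "l < rearr \<Omega> g x \<longleftrightarrow> ennreal x < Dm g l"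
proof
  assume h: "l < rearr \<Omega> g x"
  show "ennreal x < Dm g l"
  proof (rule ccontr)
    assume "\<not> ennreal x < Dm g l"
    hence "Dm g l \<le> ennreal x" by (simp add: not_less)
    hence "rearr \<Omega> g x \<le> l" by (rule rearr_lower[OF g l])
    with h show False by simp
  qed
next
  assume a: "ennreal x < Dm g l"
  show "l < rearr \<Omega> g x"
  proof (rule ccontr)
    assume "\<not> l < rearr \<Omega> g x"
    hence "Dm g l \<le> Dm g (rearr \<Omega> g x)" by (intro Dm_anti[OF g]) auto
    with rearr_attain[OF g x] a show False by simp
  qed
qed

lemma rearr_anti: assumes g: "meas_on \<Omega> g" and "0 < x" "x \<le> y" shows "rearr \<Omega> g y \<le> rearr \<Omega> g x"
proof -
  have "Dm g (rearr \<Omega> g x) \<le> ennreal y"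
    using rearr_attain[OF g \<open>0<x\<close>] ennreal_leI[OF assms(3)] by (rule order_trans)
  thus ?thesis using rearr_lower[OF g rearr_nonneg[OF g \<open>0<x\<close>]] by blast
qed

lemma rearr_mono: assumes g: "meas_on \<Omega> g" and h: "meas_on \<Omega> h" and x: "0 < x"
  and le: "\<And>z. z \<in> \<Omega> \<Longrightarrow> \<bar>g z\<bar> \<le> \<bar>h z\<bar>"
  shows "rearr \<Omega> g x \<le> rearr \<Omega> h x"
proof -
  have "Dm g (rearr \<Omega> h x) \<le> Dm h (rearr \<Omega> h x)"
    unfolding Dm_def using le by (intro emeasure_mono sets_lev[OF h]) (auto intro: less_le_trans)
  also have "\<dots> \<le> ennreal x" using rearr_attain[OF h x] .
  finally show ?thesis using rearr_lower[OF g rearr_nonneg[OF h x]] by blast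
qed

lemma rearr_bound: assumes g: "meas_on \<Omega> g" and "0 \<le> c" and "\<And>z. z \<in> \<Omega> \<Longrightarrow> \<bar>g z\<bar> \<le> c" and "0 \<le> x"
  shows "rearr \<Omega> g x \<le> c"
proof -
  have e: "{z\<in>\<Omega>. c < \<bar>g z\<bar>} = {}" using assms(3) by force
  have "Dm g c \<le> ennreal x" unfolding Dm_def e by simp
  thus ?thesis using rearr_lower[OF g assms(2)] by blast
qed

lemma rearr_subadd: assumes f: "meas_on \<Omega> f" and g0: "meas_on \<Omega> g0" and g1: "meas_on \<Omega> g1"
  and eq: "\<And>z. z \<in> \<Omega> \<Longrightarrow> f z = g0 z + g1 z" and x: "0 < x" and y: "0 < y"
  shows "rearr \<Omega> f (x + y) \<le> rearr \<Omega> g0 x + rearr \<Omega> g1 y"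
proof -
  let ?a = "rearr \<Omega> g0 x" and ?b = "rearr \<Omega> g1 y"
  have "{z\<in>\<Omega>. ?a + ?b < \<bar>f z\<bar>} \<subseteq> {z\<in>\<Omega>. ?a < \<bar>g0 z\<bar>} \<union> {z\<in>\<Omega>. ?b < \<bar>g1 z\<bar>}"
    using eq by (auto simp: not_less intro: order.trans[OF abs_triangle_ineq])
  hence "Dm f (?a + ?b) \<le> emeasure lebesgue ({z\<in>\<Omega>. ?a < \<bar>g0 z\<bar>} \<union> {z\<in>\<Omega>. ?b < \<bar>g1 z\<bar>})"
    unfolding Dm_def using sets_lev[OF g0] sets_lev[OF g1] by (intro emeasure_mono) auto
  also have "\<dots> \<le> Dm g0 ?a + Dm g1 ?b"
    unfolding Dm_def using sets_lev[OF g0] sets_lev[OF g1] by (intro emeasure_subadditive) auto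
  also have "\<dots> \<le> ennreal x + ennreal y"
    using rearr_attain[OF g0 x] rearr_attain[OF g1 y] by (intro add_mono)
  also have "\<dots> = ennreal (x + y)" using x y by simp
  finally show ?thesis
    using rearr_lower[OF f] rearr_nonneg[OF g0 x] rearr_nonneg[OF g1 y] by simp
qed


lemma meas_on_iff: "meas_on \<Omega> g \<longleftrightarrow> g \<in> borel_measurable (restrict_space lebesgue \<Omega>)"
  unfolding meas_on_def set_borel_measurable_def using \<Omega>m
  by (subst borel_measurable_restrict_space_iff) auto

lemma sets_le: assumes "meas_on \<Omega> g" shows "{x\<in>\<Omega>. y \<le> \<bar>g x\<bar>} \<in> sets lebesgue"
proof -
  have m: "(\<lambda>x. indicator \<Omega> x * g x) \<in> borel_measurable lebesgue" using meas_ind[OF assms] .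
  have "{x \<in> space lebesgue. y \<le> \<bar>indicator \<Omega> x * g x\<bar>} \<in> sets lebesgue"
    using m by measurable
  hence "\<Omega> \<inter> {x \<in> space lebesgue. y \<le> \<bar>indicator \<Omega> x * g x\<bar>} \<in> sets lebesgue"
    using \<Omega>m by blast
  moreover have "\<Omega> \<inter> {x \<in> space lebesgue. y \<le> \<bar>indicator \<Omega> x * g x\<bar>} = {x\<in>\<Omega>. y \<le> \<bar>g x\<bar>}"
    by (auto simp: indicator_def)
  ultimately show ?thesis by simp
qed

lemma rearr_cheb: assumes g: "g \<in> Lq \<Omega> q" and q: "0 < q" and x: "0 < x"
  shows "rearr \<Omega> g x \<le> x powr (-1/q) * Lq_norm \<Omega> q g"
proof (rule ccontr)
  define I where "I = (LINT z:\<Omega>|lebesgue. \<bar>g z\<bar> powr q)"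
  have gm: "meas_on \<Omega> g" and gi: "set_integrable lebesgue \<Omega> (\<lambda>z. \<bar>g z\<bar> powr q)"
    using g unfolding Lq_def by auto
  have I0: "0 \<le> I" unfolding I_def by (intro set_int_nonneg) auto
  define c where "c = x powr (-1/q) * Lq_norm \<Omega> q g"
  have c0: "0 \<le> c" by (simp add: c_def Lq_norm_def)
  assume "\<not> rearr \<Omega> g x \<le> x powr (-1/q) * Lq_norm \<Omega> q g"
  hence lt: "c < rearr \<Omega> g x" by (simp add: c_def)
  define l where "l = (c + rearr \<Omega> g x)/2"
  have l: "c < l" "l < rearr \<Omega> g x" "0 < l" using lt c0 by (auto simp: l_def)
  have "ennreal x < Dm g l" using rearr_char[OF gm x] l by auto
  also have "Dm g l \<le> emeasure lebesgue {z\<in>\<Omega>. l \<le> \<bar>g z\<bar>}"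
    unfolding Dm_def by (intro emeasure_mono sets_le[OF gm]) auto
  also have "{z\<in>\<Omega>. l \<le> \<bar>g z\<bar>} = {z\<in>\<Omega>. l powr q \<le> \<bar>g z\<bar> powr q}"
    using l q powr_le_iff2[of l q] by auto
  also have "emeasure lebesgue \<dots> \<le> (1 / l powr q) * I"
    unfolding I_def by (rule integral_Markov_inequality') (use gi \<Omega>m l in auto)
  finally have "x < (1 / l powr q) * I"
    using I0 l x by (subst (asm) ennreal_less_iff) auto
  hence "l powr q < I / x" using x l by (simp add: field_simps)
  hence "(l powr q) powr (1/q) < (I / x) powr (1/q)"
    using q l by (intro powr_less_mono2) auto
  hence "l < (I / x) powr (1/q)" using l q by (simp add: powr_powr)
  also have "(I / x) powr (1/q) = I powr (1/q) / x powr (1/q)"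
    using I0 x by (simp add: powr_divide)
  also have "\<dots> = c"
  proof -
    have "x powr (-1/q) = inverse (x powr (1/q))"
      using powr_minus[of x "1/q"] by simp
    thus ?thesis unfolding c_def Lq_norm_def I_def[symmetric] by (simp add: divide_inverse)
  qed
  finally show False using l by simp
qed


lemma rearr_meas: assumes g: "meas_on \<Omega> g"
  shows "rearr \<Omega> g \<in> borel_measurable (restrict_space lborel {0<..<1})"
proof -
  have "mono_on {0<..<1} (\<lambda>x. - rearr \<Omega> g x)"
    using rearr_anti[OF g] by (auto simp: mono_on_def)
  hence "(\<lambda>x. - rearr \<Omega> g x) \<in> borel_measurable (restrict_space borel {0<..<1})"
    by (rule borel_measurable_mono_on_fnc)
  hence "(\<lambda>x. - (- rearr \<Omega> g x)) \<in> borel_measurable (restrict_space borel {0<..<1})" by measurable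
  hence "rearr \<Omega> g \<in> borel_measurable (restrict_space borel {0<..<1})" by simp
  moreover have "sets (restrict_space lborel {0<..<1::real}) = sets (restrict_space borel {0<..<1})"
    by (simp add: sets_restrict_space)
  ultimately show ?thesis using measurable_cong_sets by blast
qed

lemma equimeas:
  fixes G :: "real \<Rightarrow> ennreal"
  assumes g: "meas_on \<Omega> g" and G: "G \<in> borel_measurable borel"
  shows "(\<integral>\<^sup>+z. G \<bar>g z\<bar> * indicator \<Omega> z \<partial>lebesgue) = (\<integral>\<^sup>+x. G (rearr \<Omega> g x) * indicator {0<..<1} x \<partial>lborel)"
proof -
  define M1 where "M1 = distr (restrict_space lebesgue \<Omega>) borel (\<lambda>z. \<bar>g z\<bar>)"
  define M2 where "M2 = distr (restrict_space lborel {0<..<1::real}) borel (rearr \<Omega> g)"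
  have gm: "g \<in> borel_measurable (restrict_space lebesgue \<Omega>)" using g meas_on_iff by blast
  hence m1: "(\<lambda>z. \<bar>g z\<bar>) \<in> measurable (restrict_space lebesgue \<Omega>) borel" by measurable
  have m2: "rearr \<Omega> g \<in> measurable (restrict_space lborel {0<..<1}) borel" using rearr_meas[OF g] .
  have \<Omega>s: "\<Omega> \<inter> space lebesgue \<in> sets lebesgue" using \<Omega>m by simp
  have I: "{0<..<1::real} \<inter> space lborel \<in> sets lborel" by simp
  have e1: "emeasure M1 {y<..} = Dm g y" for y
  proof -
    have "emeasure M1 {y<..} = emeasure (restrict_space lebesgue \<Omega>) ((\<lambda>z. \<bar>g z\<bar>) -` {y<..} \<inter> space (restrict_space lebesgue \<Omega>))"
      unfolding M1_def by (rule emeasure_distr[OF m1]) simp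
    also have "(\<lambda>z. \<bar>g z\<bar>) -` {y<..} \<inter> space (restrict_space lebesgue \<Omega>) = {z\<in>\<Omega>. y < \<bar>g z\<bar>}"
      by (auto simp: space_restrict_space)
    also have "emeasure (restrict_space lebesgue \<Omega>) \<dots> = Dm g y"
      unfolding Dm_def by (rule emeasure_restrict_space[OF \<Omega>s]) auto
    finally show ?thesis .
  qed
  have e2: "emeasure M2 {y<..} = emeasure lborel {x\<in>{0<..<1}. y < rearr \<Omega> g x}" for y
  proof -
    have "emeasure M2 {y<..} = emeasure (restrict_space lborel {0<..<1}) (rearr \<Omega> g -` {y<..} \<inter> space (restrict_space lborel {0<..<1}))"
      unfolding M2_def by (rule emeasure_distr[OF m2]) simp
    also have "rearr \<Omega> g -` {y<..} \<inter> space (restrict_space lborel {0<..<1}) = {x\<in>{0<..<1}. y < rearr \<Omega> g x}"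
      by (auto simp: space_restrict_space)
    also have "emeasure (restrict_space lborel {0<..<1}) \<dots> = emeasure lborel {x\<in>{0<..<1}. y < rearr \<Omega> g x}"
      by (rule emeasure_restrict_space[OF I]) auto
    finally show ?thesis .
  qed
  have eq: "Dm g y = emeasure lborel {x\<in>{0<..<1}. y < rearr \<Omega> g x}" for y
  proof (cases "y < 0")
    case True
    have "{z\<in>\<Omega>. y < \<bar>g z\<bar>} = \<Omega>" using True by auto
    hence "Dm g y = 1" unfolding Dm_def using \<Omega>1 by simp
    moreover have "{x\<in>{0<..<1}. y < rearr \<Omega> g x} = {0<..<1}"
      using True rearr_nonneg[OF g] by (auto intro: less_le_trans)
    ultimately show ?thesis by simp
  next
    case False
    define d where "d = enn2real (Dm g y)"
    have dD: "Dm g y = ennreal d" unfolding d_def using Dm_fin[of g y] by (simp add: less_top)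
    have d0: "0 \<le> d" unfolding d_def by simp
    have d1: "d \<le> 1" using Dm_le1[of g y] dD by simp
    have "{x\<in>{0<..<1}. y < rearr \<Omega> g x} = {0<..<d}"
    proof -
      have "x \<in> {0<..<1} \<Longrightarrow> (y < rearr \<Omega> g x \<longleftrightarrow> x < d)" for x
        using rearr_char[OF g, of x y] False dD d0 by (auto simp: ennreal_less_iff)
      thus ?thesis using d1 by auto
    qed
    thus ?thesis using dD d0 by simp
  qed
  have "M1 = M2"
  proof (rule measure_eqI_lessThan)
    show "sets M1 = sets borel" "sets M2 = sets borel" unfolding M1_def M2_def by simp_all
    fix y
    show "emeasure M1 {y<..} < \<infinity>" unfolding e1 using Dm_fin .
    show "emeasure M1 {y<..} = emeasure M2 {y<..}" unfolding e1 e2 eq ..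
  qed
  have "(\<integral>\<^sup>+z. G \<bar>g z\<bar> * indicator \<Omega> z \<partial>lebesgue) = (\<integral>\<^sup>+z. G \<bar>g z\<bar> \<partial>restrict_space lebesgue \<Omega>)"
    by (rule nn_integral_restrict_space[OF \<Omega>s, symmetric])
  also have "\<dots> = integral\<^sup>N M1 G" unfolding M1_def
    by (rule nn_integral_distr[symmetric, OF m1]) (use G in simp)
  also have "\<dots> = integral\<^sup>N M2 G" using \<open>M1 = M2\<close> by simp
  also have "\<dots> = (\<integral>\<^sup>+x. G (rearr \<Omega> g x) \<partial>restrict_space lborel {0<..<1})" unfolding M2_def
    by (rule nn_integral_distr[OF m2]) (use G in simp)
  also have "\<dots> = (\<integral>\<^sup>+x. G (rearr \<Omega> g x) * indicator {0<..<1} x \<partial>lborel)"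
    by (rule nn_integral_restrict_space[OF I])
  finally show ?thesis .
qed


lemma rint: assumes g: "meas_on \<Omega> g" and u: "0 < u" and e: "0 < e"
  shows "set_integrable lborel {u..v} (\<lambda>x. rearr \<Omega> g x powr e)"
  using rearr_anti[OF g] rearr_nonneg[OF g] u e
  by (intro si_anti powr_mono2) auto

lemma rint2: assumes g: "meas_on \<Omega> g" and u: "0 < u" and e: "0 < e"
  shows "set_integrable lborel {u..v} (\<lambda>x. rearr \<Omega> g (x/2) powr e)"
  using rearr_anti[OF g] rearr_nonneg[OF g] u e
  by (intro si_anti powr_mono2) auto

lemma rint_nonneg: assumes g: "meas_on \<Omega> g" and u: "0 < u"
  shows "0 \<le> (LINT x:{u..v}|lborel. rearr \<Omega> g x powr e)"
  by (intro si_nonneg) simp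

lemma GL_meas: "g \<in> GL \<Omega> p \<alpha> \<Longrightarrow> meas_on \<Omega> g" unfolding GL_def by auto

lemma gl_fun_le: assumes g: "g \<in> GL \<Omega> p \<alpha>" and u: "u \<in> {0<..<1}"
  shows "gl_fun \<Omega> p \<alpha> g u \<le> gl_norm \<Omega> p \<alpha> g"
  unfolding gl_norm_def using g u unfolding GL_def by (intro cSUP_upper) auto

lemma gl_norm_nonneg: assumes g: "g \<in> GL \<Omega> p \<alpha>" shows "0 \<le> gl_norm \<Omega> p \<alpha> g"
proof -
  have "0 \<le> gl_fun \<Omega> p \<alpha> g (1/2)" unfolding gl_fun_def by simp
  also have "\<dots> \<le> gl_norm \<Omega> p \<alpha> g" using gl_fun_le[OF g, of "1/2"] by simp
  finally show ?thesis .
qed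

lemma Gbound: assumes g: "g \<in> GL \<Omega> p \<alpha>" and u: "0 < u" "u < 1" and p: "0 < p"
  shows "(LINT x:{u..1}|lborel. rearr \<Omega> g x powr p) \<le> gl_norm \<Omega> p \<alpha> g powr p * (1 - ln u) powr \<alpha>"
proof -
  define Y where "Y = (LINT x:{u..1}|lborel. rearr \<Omega> g x powr p)"
  define G where "G = gl_norm \<Omega> p \<alpha> g"
  define L where "L = 1 - ln u"
  have L: "0 < L" unfolding L_def using ln_pos1 u by simp
  have Y0: "0 \<le> Y" unfolding Y_def by (intro si_nonneg) simp
  have G0: "0 \<le> G" unfolding G_def using gl_norm_nonneg[OF g] .
  have "L powr (- \<alpha> / p) * Y powr (1/p) \<le> G"
    using gl_fun_le[OF g, of u] u unfolding gl_fun_def Y_def G_def L_def by simp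
  hence "Y powr (1/p) \<le> G * L powr (\<alpha>/p)"
    using L by (simp add: powr_minus divide_simps mult.commute)
  hence "(Y powr (1/p)) powr p \<le> (G * L powr (\<alpha>/p)) powr p"
    using p Y0 by (intro powr_mono2) auto
  moreover have "(Y powr (1/p)) powr p = Y" using Y0 p by (simp add: powr_powr)
  moreover have "(G * L powr (\<alpha>/p)) powr p = G powr p * L powr \<alpha>"
    using p by (simp add: powr_mult powr_powr)
  ultimately show ?thesis unfolding Y_def G_def L_def by simp
qed


lemma lower_A:
  assumes p: "1 < p" and pq: "p < q" and al: "0 < \<alpha>"
    and g0: "g0 \<in> GL \<Omega> p \<alpha>" and g1: "g1 \<in> Lq \<Omega> q" and fm: "meas_on \<Omega> f"
    and eq: "\<And>z. z \<in> \<Omega> \<Longrightarrow> f z = g0 z + g1 z"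
    and \<phi>: "0 < \<phi>" "\<phi> < 1" and t: "t = \<phi> powr (1/p-1/q) * (1 - ln \<phi>) powr (-\<alpha>/p)"
    and s: "0 < s" "s < \<phi>"
  shows "(1 - ln s) powr (-\<alpha>/p) * (LINT x:{s..\<phi>}|lborel. rearr \<Omega> f x powr p) powr (1/p)
     \<le> CA p q \<alpha> * (gl_norm \<Omega> p \<alpha> g0 + t * Lq_norm \<Omega> q g1)"
proof -
  define G where "G = gl_norm \<Omega> p \<alpha> g0"
  define N where "N = Lq_norm \<Omega> q g1"
  define X where "X = (LINT x:{s..\<phi>}|lborel. rearr \<Omega> f x powr p)"
  define C where "C = 2 powr p * 2 powr (p/q) * N powr p"
  have G0: "0 \<le> G" unfolding G_def by (rule gl_norm_nonneg[OF g0])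
  have N0: "0 \<le> N" unfolding N_def Lq_norm_def by simp
  have t0: "0 < t" unfolding t using \<phi> ln_pos1[of \<phi>] by simp
  have g0m: "meas_on \<Omega> g0" using g0 GL_meas by blast
  have g1m: "meas_on \<Omega> g1" using g1 unfolding Lq_def by blast
  have q0: "0 < q" using p pq by simp
  have pq1: "0 < 1 - p/q" using p pq by simp
  have X0: "0 \<le> X" unfolding X_def by (intro si_nonneg) simp
  have pw: "rearr \<Omega> f x powr p \<le> 2 powr p * rearr \<Omega> g0 (x/2) powr p + C * x powr (-(p/q))"
    if x: "s \<le> x" "x \<le> \<phi>" for x
  proof -
    have x0: "0 < x" using x s by simp
    have h1: "rearr \<Omega> f x \<le> rearr \<Omega> g0 (x/2) + rearr \<Omega> g1 (x/2)"
      using rearr_subadd[OF fm g0m g1m eq, of "x/2" "x/2"] x0 by simp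
    have h2: "rearr \<Omega> g1 (x/2) \<le> (x/2) powr (-1/q) * N"
      unfolding N_def using rearr_cheb[OF g1 q0, of "x/2"] x0 by simp
    have a0: "0 \<le> rearr \<Omega> g0 (x/2)" using rearr_nonneg[OF g0m, of "x/2"] x0 by simp
    have f0: "0 \<le> rearr \<Omega> f x" using rearr_nonneg[OF fm x0] .
    have "rearr \<Omega> f x powr p \<le> (rearr \<Omega> g0 (x/2) + (x/2) powr (-1/q) * N) powr p"
      using h1 h2 f0 p by (intro powr_mono2) auto
    also have "\<dots> \<le> 2 powr p * (rearr \<Omega> g0 (x/2) powr p + ((x/2) powr (-1/q) * N) powr p)"
      using a0 N0 p by (intro sum_powr) auto
    also have "((x/2) powr (-1/q) * N) powr p = 2 powr (p/q) * N powr p * x powr (-(p/q))"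
    proof -
      have "((x/2) powr (-1/q) * N) powr p = (x/2) powr (-1/q*p) * N powr p"
        by (simp add: powr_mult powr_powr)
      also have "(x/2) powr (-1/q*p) = x powr (-(p/q)) / 2 powr (-(p/q))"
        by (simp add: powr_divide)
      also have "\<dots> = x powr (-(p/q)) * 2 powr (p/q)"
        by (simp add: powr_minus divide_inverse)
      finally show ?thesis by simp
    qed
    finally show ?thesis unfolding C_def by (simp add: algebra_simps)
  qed
  have i1: "set_integrable lborel {s..\<phi>} (\<lambda>x. 2 powr p * rearr \<Omega> g0 (x/2) powr p)"
    using rint2[OF g0m s(1), of p] p by simp
  have i2: "set_integrable lborel {s..\<phi>} (\<lambda>x. C * x powr (-(p/q)))"
  proof -
    have "continuous_on {s..\<phi>} (\<lambda>x. x powr (-(p/q)))" using s by (intro continuous_intros) auto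
    hence "set_integrable lborel {s..\<phi>} (\<lambda>x. x powr (-(p/q)))" by (rule borel_integrable_atLeastAtMost')
    thus ?thesis by simp
  qed
  have "X \<le> (LINT x:{s..\<phi>}|lborel. 2 powr p * rearr \<Omega> g0 (x/2) powr p + C * x powr (-(p/q)))"
    unfolding X_def using pw by (intro si_mono rint[OF fm s(1)] set_integral_add(1) i1 i2) (use p in auto)
  also have "\<dots> = 2 powr p * (LINT x:{s..\<phi>}|lborel. rearr \<Omega> g0 (x/2) powr p) + C * (LINT x:{s..\<phi>}|lborel. x powr (-(p/q)))"
    using i1 i2 by (simp add: set_integral_add(2))
  also have "(LINT x:{s..\<phi>}|lborel. rearr \<Omega> g0 (x/2) powr p) \<le> 2 * (G powr p * (1 - ln (s/2)) powr \<alpha>)"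
  proof -
    have "(LINT x:{s..\<phi>}|lborel. rearr \<Omega> g0 (x/2) powr p) = 2 * (LINT x:{s/2..\<phi>/2}|lborel. rearr \<Omega> g0 x powr p)"
      by (rule si_scale)
    also have "(LINT x:{s/2..\<phi>/2}|lborel. rearr \<Omega> g0 x powr p) \<le> (LINT x:{s/2..1}|lborel. rearr \<Omega> g0 x powr p)"
      using s \<phi> by (intro si_sub rint[OF g0m]) (use p in auto)
    also have "\<dots> \<le> G powr p * (1 - ln (s/2)) powr \<alpha>"
      unfolding G_def using s \<phi> p by (intro Gbound[OF g0]) auto
    finally show ?thesis by simp
  qed
  also have "(LINT x:{s..\<phi>}|lborel. x powr (-(p/q))) \<le> \<phi> powr (1 - p/q) / (1 - p/q)"
  proof -
    have "(LINT x:{s..\<phi>}|lborel. x powr (-(p/q))) = (\<phi> powr (1-p/q) - s powr (1-p/q)) / (1-p/q)"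
      using s pq1 by (intro si_pow) auto
    also have "\<dots> \<le> \<phi> powr (1 - p/q) / (1 - p/q)"
      using pq1 by (intro divide_right_mono) auto
    finally show ?thesis .
  qed
  finally have Xb: "X \<le> 2 powr p * (2 * (G powr p * (1 - ln (s/2)) powr \<alpha>)) + C * (\<phi> powr (1 - p/q) / (1 - p/q))"
    using C_def by (simp add: mult_left_mono)
  define L where "L = 1 - ln s"
  have L: "0 < L" unfolding L_def using ln_pos1[of s] s \<phi> by simp
  have F1: "L powr (-\<alpha>) * (1 - ln (s/2)) powr \<alpha> \<le> (1 + ln 2) powr \<alpha>"
    using ln_half_bound[of s 2] s \<phi> ln_pos1[of "s/2"] L al unfolding L_def
    by (intro powr_ratio) auto
  have F2: "L powr (-\<alpha>) \<le> (1 - ln \<phi>) powr (-\<alpha>)"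
    unfolding L_def using s \<phi> ln_pos1[of \<phi>] al by (intro powr_mono2') auto
  have F3: "\<phi> powr (1 - p/q) * (1 - ln \<phi>) powr (-\<alpha>) = t powr p"
  proof -
    have e1: "(1/p-1/q)*p = 1 - p/q" using p by (simp add: field_simps)
    have e2: "-\<alpha>/p*p = -\<alpha>" using p by simp
    show ?thesis using t_powr[OF \<phi> t, of p] p unfolding e1 e2 by simp
  qed
  have "L powr (-\<alpha>) * X \<le> L powr (-\<alpha>) * (2 powr p * (2 * (G powr p * (1 - ln (s/2)) powr \<alpha>)) + C * (\<phi> powr (1 - p/q) / (1 - p/q)))"
    using Xb by (intro mult_left_mono) auto
  also have "\<dots> = 2 powr p * 2 * G powr p * (L powr (-\<alpha>) * (1 - ln (s/2)) powr \<alpha>)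
       + C / (1 - p/q) * (L powr (-\<alpha>) * \<phi> powr (1 - p/q))"
    by (simp add: algebra_simps)
  also have "\<dots> \<le> 2 powr p * 2 * G powr p * (1 + ln 2) powr \<alpha> + C / (1 - p/q) * ((1 - ln \<phi>) powr (-\<alpha>) * \<phi> powr (1 - p/q))"
    using F1 F2 pq1 N0 unfolding C_def by (intro add_mono mult_left_mono mult_right_mono) auto
  also have "(1 - ln \<phi>) powr (-\<alpha>) * \<phi> powr (1 - p/q) = t powr p" using F3 by (simp add: mult.commute)
  also have "C / (1 - p/q) * t powr p = (2 powr p * 2 powr (p/q) / (1 - p/q)) * (t * N) powr p"
    unfolding C_def by (simp add: powr_mult)
  also have "2 powr p * 2 * G powr p * (1 + ln 2) powr \<alpha> = (2 powr (p+1) * (1 + ln 2) powr \<alpha>) * G powr p"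
    by (simp add: powr_add)
  also have "(2 powr (p+1) * (1 + ln 2) powr \<alpha>) * G powr p + (2 powr p * 2 powr (p/q) / (1 - p/q)) * (t * N) powr p
     \<le> (2 powr (p+1) * (1 + ln 2) powr \<alpha>) * (G + t * N) powr p + (2 powr p * 2 powr (p/q) / (1 - p/q)) * (G + t * N) powr p"
    using G0 N0 t0 p pq1 by (intro add_mono mult_left_mono powr_mono2) auto
  also have "\<dots> = (CA p q \<alpha> * (G + t * N)) powr p"
  proof -
    have c0: "0 \<le> 2 powr (p+1) * (1 + ln 2) powr \<alpha> + 2 powr p * 2 powr (p/q) / (1 - p/q)"
      using pq1 by simp
    have ca: "(CA p q \<alpha>) powr p = 2 powr (p+1) * (1 + ln 2) powr \<alpha> + 2 powr p * 2 powr (p/q) / (1 - p/q)"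
      unfolding CA_def using c0 p by (simp add: powr_powr)
    have h: "(CA p q \<alpha> * (G + t*N)) powr p = CA p q \<alpha> powr p * (G + t*N) powr p" by (rule powr_mult)
    show ?thesis unfolding h ca by (simp only: distrib_right)
  qed
  finally have main: "L powr (-\<alpha>/p * p) * X \<le> (CA p q \<alpha> * (G + t * N)) powr p" using p by simp
  have "L powr (-\<alpha>/p) * X powr (1/p) \<le> CA p q \<alpha> * (G + t * N)"
    using L X0 p main G0 N0 t0 by (intro root_bound) (auto simp: CA_def)
  thus ?thesis unfolding L_def X_def G_def N_def .
qed


lemma Lq_int: assumes g: "g \<in> Lq \<Omega> q" and q: "0 < q"
  shows "ennreal (Lq_norm \<Omega> q g powr q) = (\<integral>\<^sup>+z. ennreal (\<bar>g z\<bar> powr q) * indicator \<Omega> z \<partial>lebesgue)"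
proof -
  have gi: "set_integrable lebesgue \<Omega> (\<lambda>z. \<bar>g z\<bar> powr q)" using g unfolding Lq_def by auto
  have I0: "0 \<le> (LINT z:\<Omega>|lebesgue. \<bar>g z\<bar> powr q)" by (intro set_int_nonneg) auto
  have "Lq_norm \<Omega> q g powr q = (LINT z:\<Omega>|lebesgue. \<bar>g z\<bar> powr q)"
    unfolding Lq_norm_def using I0 q by (simp add: powr_powr)
  thus ?thesis using set_integral_nn[OF gi] by simp
qed

lemma equi_le: assumes g: "g \<in> Lq \<Omega> q" and q: "0 < q" and u: "0 < u" and v: "v < 1"
  shows "(LINT x:{u..v}|lborel. rearr \<Omega> g x powr q) \<le> Lq_norm \<Omega> q g powr q"
proof -
  have gm: "meas_on \<Omega> g" using g unfolding Lq_def by auto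
  have "ennreal (LINT x:{u..v}|lborel. rearr \<Omega> g x powr q) = (\<integral>\<^sup>+x. ennreal (rearr \<Omega> g x powr q) * indicator {u..v} x \<partial>lborel)"
    by (rule set_integral_nn[OF rint[OF gm u q]]) simp
  also have "\<dots> \<le> (\<integral>\<^sup>+x. ennreal (rearr \<Omega> g x powr q) * indicator {0<..<1} x \<partial>lborel)"
    using u v by (intro nn_integral_mono) (auto simp: indicator_def)
  also have "\<dots> = (\<integral>\<^sup>+z. ennreal (\<bar>g z\<bar> powr q) * indicator \<Omega> z \<partial>lebesgue)"
    by (rule equimeas[OF gm, of "\<lambda>y. ennreal (y powr q)", symmetric]) measurable
  also have "\<dots> = ennreal (Lq_norm \<Omega> q g powr q)" using Lq_int[OF g q] by simp
  finally show ?thesis by (simp add: ennreal_le_iff)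
qed

lemma lower_B:
  assumes p: "1 < p" and pq: "p < q" and al: "0 < \<alpha>"
    and g0: "g0 \<in> GL \<Omega> p \<alpha>" and g1: "g1 \<in> Lq \<Omega> q" and fm: "meas_on \<Omega> f"
    and eq: "\<And>z. z \<in> \<Omega> \<Longrightarrow> f z = g0 z + g1 z"
    and \<phi>: "0 < \<phi>" "\<phi> < 1" and t: "t = \<phi> powr (1/p-1/q) * (1 - ln \<phi>) powr (-\<alpha>/p)"
  shows "t * (LINT x:{\<phi>..1}|lborel. rearr \<Omega> f x powr q) powr (1/q)
     \<le> CB p q \<alpha> * (gl_norm \<Omega> p \<alpha> g0 + t * Lq_norm \<Omega> q g1)"
proof -
  define G where "G = gl_norm \<Omega> p \<alpha> g0"
  define N where "N = Lq_norm \<Omega> q g1"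
  define Y where "Y = (LINT x:{\<phi>..1}|lborel. rearr \<Omega> f x powr q)"
  define M where "M = rearr \<Omega> g0 (\<phi>/2)"
  define L where "L = 1 - ln (\<phi>/4)"
  define e where "e = (q-p)/p"
  have G0: "0 \<le> G" unfolding G_def by (rule gl_norm_nonneg[OF g0])
  have N0: "0 \<le> N" unfolding N_def Lq_norm_def by simp
  have t0: "0 < t" unfolding t using \<phi> ln_pos1[of \<phi>] by simp
  have g0m: "meas_on \<Omega> g0" using g0 GL_meas by blast
  have g1m: "meas_on \<Omega> g1" using g1 unfolding Lq_def by blast
  have q0: "0 < q" using p pq by simp
  have qp: "0 < q - p" using pq by simp
  have e0: "0 < e" unfolding e_def using p pq by simp
  have Y0: "0 \<le> Y" unfolding Y_def by (intro si_nonneg) simp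
  have M0: "0 \<le> M" unfolding M_def using rearr_nonneg[OF g0m, of "\<phi>/2"] \<phi> by simp
  have L1: "1 \<le> L" unfolding L_def using \<phi> ln_pos1[of "\<phi>/4"] by (simp add: ln_div)
  have L0: "0 < L" using L1 by simp
  have Lh: "1 - ln (\<phi>/2) \<le> L" unfolding L_def using \<phi> by (simp add: ln_div)
  have pw: "rearr \<Omega> f x powr q \<le> (2 powr q * M powr (q-p)) * rearr \<Omega> g0 (x/2) powr p + 2 powr q * rearr \<Omega> g1 (x/2) powr q"
    if x: "\<phi> \<le> x" "x \<le> 1" for x
  proof -
    have x0: "0 < x" using x \<phi> by simp
    have h1: "rearr \<Omega> f x \<le> rearr \<Omega> g0 (x/2) + rearr \<Omega> g1 (x/2)"
      using rearr_subadd[OF fm g0m g1m eq, of "x/2" "x/2"] x0 by simp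
    have a0: "0 \<le> rearr \<Omega> g0 (x/2)" using rearr_nonneg[OF g0m, of "x/2"] x0 by simp
    have b0: "0 \<le> rearr \<Omega> g1 (x/2)" using rearr_nonneg[OF g1m, of "x/2"] x0 by simp
    have aM: "rearr \<Omega> g0 (x/2) \<le> M" unfolding M_def using rearr_anti[OF g0m, of "\<phi>/2" "x/2"] \<phi> x by simp
    have f0: "0 \<le> rearr \<Omega> f x" using rearr_nonneg[OF fm x0] .
    have "rearr \<Omega> f x powr q \<le> (rearr \<Omega> g0 (x/2) + rearr \<Omega> g1 (x/2)) powr q"
      using h1 f0 q0 by (intro powr_mono2) auto
    also have "\<dots> \<le> 2 powr q * (rearr \<Omega> g0 (x/2) powr q + rearr \<Omega> g1 (x/2) powr q)"
      using a0 b0 q0 by (intro sum_powr) auto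
    also have "rearr \<Omega> g0 (x/2) powr q \<le> M powr (q-p) * rearr \<Omega> g0 (x/2) powr p"
    proof -
      have "rearr \<Omega> g0 (x/2) powr q = rearr \<Omega> g0 (x/2) powr (q-p) * rearr \<Omega> g0 (x/2) powr p"
        by (simp add: powr_add[symmetric])
      also have "\<dots> \<le> M powr (q-p) * rearr \<Omega> g0 (x/2) powr p"
        using aM a0 qp by (intro mult_right_mono powr_mono2) auto
      finally show ?thesis .
    qed
    finally show ?thesis by (simp add: algebra_simps mult_left_mono)
  qed
  have i1: "set_integrable lborel {\<phi>..1} (\<lambda>x. (2 powr q * M powr (q-p)) * rearr \<Omega> g0 (x/2) powr p)"
    using rint2[OF g0m \<phi>(1), of p] p by simp
  have i2: "set_integrable lborel {\<phi>..1} (\<lambda>x. 2 powr q * rearr \<Omega> g1 (x/2) powr q)"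
    using rint2[OF g1m \<phi>(1), of q] q0 by simp
  have "Y \<le> (LINT x:{\<phi>..1}|lborel. (2 powr q * M powr (q-p)) * rearr \<Omega> g0 (x/2) powr p + 2 powr q * rearr \<Omega> g1 (x/2) powr q)"
    unfolding Y_def using pw by (intro si_mono rint[OF fm \<phi>(1)] set_integral_add(1) i1 i2) (use q0 in auto)
  also have "\<dots> = (2 powr q * M powr (q-p)) * (LINT x:{\<phi>..1}|lborel. rearr \<Omega> g0 (x/2) powr p)
      + 2 powr q * (LINT x:{\<phi>..1}|lborel. rearr \<Omega> g1 (x/2) powr q)"
    using i1 i2 by (simp add: set_integral_add(2))
  also have "(LINT x:{\<phi>..1}|lborel. rearr \<Omega> g0 (x/2) powr p) \<le> 2 * (G powr p * L powr \<alpha>)"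
  proof -
    have "(LINT x:{\<phi>..1}|lborel. rearr \<Omega> g0 (x/2) powr p) = 2 * (LINT x:{\<phi>/2..1/2}|lborel. rearr \<Omega> g0 x powr p)"
      by (rule si_scale)
    also have "(LINT x:{\<phi>/2..1/2}|lborel. rearr \<Omega> g0 x powr p) \<le> (LINT x:{\<phi>/2..1}|lborel. rearr \<Omega> g0 x powr p)"
      using \<phi> by (intro si_sub rint[OF g0m]) (use p in auto)
    also have "\<dots> \<le> G powr p * (1 - ln (\<phi>/2)) powr \<alpha>"
      unfolding G_def using \<phi> p by (intro Gbound[OF g0]) auto
    also have "\<dots> \<le> G powr p * L powr \<alpha>"
      using Lh al \<phi> ln_pos1[of "\<phi>/2"] by (intro mult_left_mono powr_mono2) auto
    finally show ?thesis by simp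
  qed
  also have "(LINT x:{\<phi>..1}|lborel. rearr \<Omega> g1 (x/2) powr q) \<le> 2 * N powr q"
  proof -
    have "(LINT x:{\<phi>..1}|lborel. rearr \<Omega> g1 (x/2) powr q) = 2 * (LINT x:{\<phi>/2..1/2}|lborel. rearr \<Omega> g1 x powr q)"
      by (rule si_scale)
    also have "(LINT x:{\<phi>/2..1/2}|lborel. rearr \<Omega> g1 x powr q) \<le> N powr q"
      unfolding N_def using \<phi> by (intro equi_le[OF g1 q0]) auto
    finally show ?thesis by simp
  qed
  finally have Yb: "Y \<le> (2 powr q * M powr (q-p)) * (2 * (G powr p * L powr \<alpha>)) + 2 powr q * (2 * N powr q)"
    using M0 by (simp add: mult_left_mono)
  have Mp: "M powr p * (\<phi>/4) \<le> G powr p * L powr \<alpha>"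
  proof -
    have "M powr p * (\<phi>/4) = (LINT x:{\<phi>/4..\<phi>/2}|lborel. M powr p)"
      using \<phi> by (subst si_const) auto
    also have "\<dots> \<le> (LINT x:{\<phi>/4..\<phi>/2}|lborel. rearr \<Omega> g0 x powr p)"
    proof (rule si_mono)
      show "set_integrable lborel {\<phi>/4..\<phi>/2} (\<lambda>x. M powr p)"
        using \<phi> by (intro borel_integrable_atLeastAtMost') (intro continuous_intros)
      show "set_integrable lborel {\<phi>/4..\<phi>/2} (\<lambda>x. rearr \<Omega> g0 x powr p)"
        using \<phi> p by (intro rint[OF g0m]) auto
      fix x assume x: "\<phi>/4 \<le> x" "x \<le> \<phi>/2"
      thus "M powr p \<le> rearr \<Omega> g0 x powr p"
        unfolding M_def using \<phi> p M0[unfolded M_def] by (intro powr_mono2 rearr_anti[OF g0m]) auto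
    qed
    also have "\<dots> \<le> (LINT x:{\<phi>/4..1}|lborel. rearr \<Omega> g0 x powr p)"
      using \<phi> by (intro si_sub rint[OF g0m]) (use p in auto)
    also have "\<dots> \<le> G powr p * L powr \<alpha>"
      unfolding G_def L_def using \<phi> p by (intro Gbound[OF g0]) auto
    finally show ?thesis .
  qed
  have Mp2: "M powr p \<le> 4 * G powr p * L powr \<alpha> / \<phi>"
    using Mp \<phi> by (simp add: field_simps)
  have Me: "M powr (q-p) \<le> (4 * G powr p * L powr \<alpha> / \<phi>) powr e"
  proof -
    have "M powr (q-p) = (M powr p) powr e" unfolding e_def using p by (simp add: powr_powr)
    also have "\<dots> \<le> (4 * G powr p * L powr \<alpha> / \<phi>) powr e"
      using Mp2 e0 by (intro powr_mono2) auto
    finally show ?thesis .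
  qed
  have Eq: "t powr q * ((4 * G powr p * L powr \<alpha> / \<phi>) powr e * (G powr p * L powr \<alpha>))
      = 4 powr e * G powr q * (L powr (\<alpha>*q/p) * (1 - ln \<phi>) powr (-(\<alpha>*q/p)))"
  proof -
    have x1: "(1/p-1/q)*q = e" unfolding e_def using p pq by (simp add: field_simps)
    have x2: "-\<alpha>/p*q = -(\<alpha>*q/p)" by simp
    have tq: "t powr q = \<phi> powr e * (1 - ln \<phi>) powr (-(\<alpha>*q/p))"
      using t_powr[OF \<phi> t, of q] p unfolding x1 x2 by simp
    have y1: "p * e + p = q" unfolding e_def using p by (simp add: field_simps)
    have y2: "\<alpha> * e + \<alpha> = \<alpha>*q/p" unfolding e_def using p by (simp add: field_simps)
    have G: "G powr (p*e) * G powr p = G powr q" using y1 by (simp add: powr_add[symmetric])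
    have LL: "L powr (\<alpha>*e) * L powr \<alpha> = L powr (\<alpha>*q/p)" using y2 by (simp add: powr_add[symmetric])
    have ph: "\<phi> powr e / \<phi> powr e = 1" using \<phi> by simp
    have "(4 * G powr p * L powr \<alpha> / \<phi>) powr e = 4 powr e * G powr (p*e) * L powr (\<alpha>*e) / \<phi> powr e"
      by (simp add: powr_mult powr_divide powr_powr)
    hence "t powr q * ((4 * G powr p * L powr \<alpha> / \<phi>) powr e * (G powr p * L powr \<alpha>))
      = 4 powr e * (G powr (p*e) * G powr p) * (L powr (\<alpha>*e) * L powr \<alpha>) * (1 - ln \<phi>) powr (-(\<alpha>*q/p)) * (\<phi> powr e / \<phi> powr e)"
      unfolding tq by (simp add: field_simps)
    thus ?thesis unfolding G LL ph by simp
  qed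
  have Rt: "L powr (\<alpha>*q/p) * (1 - ln \<phi>) powr (-(\<alpha>*q/p)) \<le> (1 + ln 4) powr (\<alpha>*q/p)"
  proof -
    have "(1 - ln \<phi>) powr (-(\<alpha>*q/p)) * L powr (\<alpha>*q/p) \<le> (1 + ln 4) powr (\<alpha>*q/p)"
      using ln_half_bound[of \<phi> 4] \<phi> L0 ln_pos1[of \<phi>] al p q0 unfolding L_def
      by (intro powr_ratio) auto
    thus ?thesis by (simp add: mult.commute)
  qed
  define C3 where "C3 = 2 powr (q+1) * 4 powr e * (1 + ln 4) powr (\<alpha>*q/p)"
  have "t powr q * Y \<le> t powr q * ((2 powr q * M powr (q-p)) * (2 * (G powr p * L powr \<alpha>)) + 2 powr q * (2 * N powr q))"
    using Yb by (intro mult_left_mono) auto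
  also have "\<dots> = 2 powr q * 2 * (t powr q * M powr (q-p) * (G powr p * L powr \<alpha>)) + 2 powr q * 2 * (t powr q * N powr q)"
    by (simp add: algebra_simps)
  also have "t powr q * M powr (q-p) * (G powr p * L powr \<alpha>) \<le> t powr q * ((4 * G powr p * L powr \<alpha> / \<phi>) powr e * (G powr p * L powr \<alpha>))"
    using mult_left_mono[OF mult_right_mono[OF Me, of "G powr p * L powr \<alpha>"], of "t powr q"]
    by (simp add: mult.assoc)
  also have "\<dots> \<le> 4 powr e * G powr q * (1 + ln 4) powr (\<alpha>*q/p)"
    unfolding Eq using Rt by (intro mult_left_mono) auto
  also have "t powr q * N powr q = (t * N) powr q" by (simp add: powr_mult)
  also have "2 powr q * 2 * (4 powr e * G powr q * (1 + ln 4) powr (\<alpha>*q/p)) = C3 * G powr q"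
    unfolding C3_def by (simp add: powr_add)
  also have "2 powr q * 2 = 2 powr (q+1)" by (simp add: powr_add)
  also have "C3 * G powr q + 2 powr (q+1) * (t * N) powr q \<le> C3 * (G + t*N) powr q + 2 powr (q+1) * (G + t*N) powr q"
    using G0 N0 t0 q0 unfolding C3_def by (intro add_mono mult_left_mono powr_mono2) auto
  also have "\<dots> = (CB p q \<alpha> * (G + t*N)) powr q"
  proof -
    have c0: "0 \<le> C3 + 2 powr (q+1)" unfolding C3_def by simp
    have cb: "(CB p q \<alpha>) powr q = C3 + 2 powr (q+1)"
      unfolding CB_def C3_def e_def using c0[unfolded C3_def e_def] q0 by (simp add: powr_powr)
    have h: "(CB p q \<alpha> * (G + t*N)) powr q = CB p q \<alpha> powr q * (G + t*N) powr q" by (rule powr_mult)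
    show ?thesis unfolding h cb by (simp only: distrib_right)
  qed
  finally have main: "t powr (1 * q) * Y \<le> (CB p q \<alpha> * (G + t*N)) powr q" by simp
  have "t powr 1 * Y powr (1/q) \<le> CB p q \<alpha> * (G + t*N)"
    using t0 Y0 q0 main G0 N0 by (intro root_bound) (auto simp: CB_def)
  thus ?thesis unfolding Y_def G_def N_def using t0 by simp
qed


lemma upper:
  assumes p: "1 < p" and pq: "p < q" and al: "0 < \<alpha>"
    and fm: "meas_on \<Omega> f"
    and \<phi>: "0 < \<phi>" "\<phi> < 1" and t: "t = \<phi> powr (1/p-1/q) * (1 - ln \<phi>) powr (-\<alpha>/p)"
    and bdd: "bdd_above ((\<lambda>s. (1 - ln s) powr (-\<alpha>/p) * (LINT x:{s..\<phi>}|lborel. rearr \<Omega> f x powr p) powr (1/p)) ` {0<..<\<phi>})"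
  shows "Kfun \<Omega> p \<alpha> q f t \<le> CU p \<alpha> * ((SUP s\<in>{0<..<\<phi>}. (1 - ln s) powr (-\<alpha>/p) * (LINT x:{s..\<phi>}|lborel. rearr \<Omega> f x powr p) powr (1/p))
      + t * (LINT x:{\<phi>..1}|lborel. rearr \<Omega> f x powr q) powr (1/q))"
proof -
  define T where "T = (\<lambda>s. (1 - ln s) powr (-\<alpha>/p) * (LINT x:{s..\<phi>}|lborel. rearr \<Omega> f x powr p) powr (1/p))"
  define A where "A = (SUP s\<in>{0<..<\<phi>}. T s)"
  define Y where "Y = (LINT x:{\<phi>..1}|lborel. rearr \<Omega> f x powr q)"
  define l where "l = rearr \<Omega> f \<phi>"
  define g1 where "g1 = (\<lambda>z. max (-l) (min l (f z)))"
  define g0 where "g0 = (\<lambda>z. f z - g1 z)"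
  have bddT: "bdd_above (T ` {0<..<\<phi>})" using bdd unfolding T_def .
  have TA: "T s \<le> A" if "s \<in> {0<..<\<phi>}" for s unfolding A_def using bddT that by (intro cSUP_upper) auto
  have T0: "0 \<le> T s" for s unfolding T_def by simp
  have A0: "0 \<le> A" using TA[of "\<phi>/2"] T0[of "\<phi>/2"] \<phi> by simp
  have q0: "0 < q" and q1: "1 \<le> q" using p pq by auto
  have p0: "0 < p" using p by simp
  have t0: "0 < t" unfolding t using \<phi> ln_pos1[of \<phi>] by simp
  have l0: "0 \<le> l" unfolding l_def using rearr_nonneg[OF fm \<phi>(1)] .
  have Y0: "0 \<le> Y" unfolding Y_def by (intro si_nonneg) simp
  have fb: "f \<in> borel_measurable (restrict_space lebesgue \<Omega>)" using fm meas_on_iff by blast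
  have g1b: "g1 \<in> borel_measurable (restrict_space lebesgue \<Omega>)" unfolding g1_def using fb by measurable
  have g0b: "g0 \<in> borel_measurable (restrict_space lebesgue \<Omega>)" unfolding g0_def using fb g1b by measurable
  have g1m: "meas_on \<Omega> g1" using g1b meas_on_iff by blast
  have g0m: "meas_on \<Omega> g0" using g0b meas_on_iff by blast
  have a1: "\<bar>g1 z\<bar> \<le> \<bar>f z\<bar>" "\<bar>g1 z\<bar> \<le> l" for z unfolding g1_def using l0 by (auto simp: max_def min_def)
  have a0: "\<bar>g0 z\<bar> \<le> \<bar>f z\<bar>" for z unfolding g0_def g1_def using l0 by (auto simp: max_def min_def)
  have a0': "l < \<bar>f z\<bar>" if z: "0 < \<bar>g0 z\<bar>" for z
  proof (rule ccontr)
    assume "\<not> l < \<bar>f z\<bar>"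
    hence "-l \<le> f z" "f z \<le> l" by auto
    hence "g1 z = f z" unfolding g1_def by simp
    hence "g0 z = 0" unfolding g0_def by simp
    with z show False by simp
  qed
  have eqf: "f z = g0 z + g1 z" for z unfolding g0_def by simp
  have z0: "rearr \<Omega> g0 x = 0" if x: "\<phi> \<le> x" for x
  proof -
    have "Dm g0 0 \<le> Dm f l"
      unfolding Dm_def using a0' by (intro emeasure_mono sets_lev[OF fm]) auto
    also have "\<dots> \<le> ennreal \<phi>" unfolding l_def by (rule rearr_attain[OF fm \<phi>(1)])
    also have "\<dots> \<le> ennreal x" using x by (rule ennreal_leI)
    finally have "rearr \<Omega> g0 x \<le> 0" by (intro rearr_lower[OF g0m]) auto
    thus ?thesis using rearr_nonneg[OF g0m, of x] x \<phi> by simp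
  qed
  have glb: "gl_fun \<Omega> p \<alpha> g0 s \<le> A" if s: "s \<in> {0<..<1}" for s
  proof (cases "s < \<phi>")
    case True
    have i0: "set_integrable lborel {s..1} (\<lambda>x. rearr \<Omega> g0 x powr p)" using rint[OF g0m _ p0] s by simp
    have "(LINT x:{s..1}|lborel. rearr \<Omega> g0 x powr p) = (LINT x:{s..\<phi>}|lborel. rearr \<Omega> g0 x powr p) + (LINT x:{\<phi>..1}|lborel. rearr \<Omega> g0 x powr p)"
      using True \<phi> i0 by (intro si_split) auto
    also have "(LINT x:{\<phi>..1}|lborel. rearr \<Omega> g0 x powr p) = (LINT x:{\<phi>..1}|lborel. 0)"
      using z0 p0 by (intro set_lebesgue_integral_cong) auto
    also have "(LINT x:{s..\<phi>}|lborel. rearr \<Omega> g0 x powr p) \<le> (LINT x:{s..\<phi>}|lborel. rearr \<Omega> f x powr p)"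
      using s p0 by (intro si_mono rint[OF g0m] rint[OF fm] powr_mono2 rearr_mono[OF g0m fm] a0) (auto intro: rearr_nonneg[OF g0m])
    finally have "(LINT x:{s..1}|lborel. rearr \<Omega> g0 x powr p) \<le> (LINT x:{s..\<phi>}|lborel. rearr \<Omega> f x powr p)" by simp
    hence "gl_fun \<Omega> p \<alpha> g0 s \<le> T s"
      unfolding gl_fun_def T_def using p0 by (intro mult_left_mono powr_mono2) (auto intro!: si_nonneg)
    also have "\<dots> \<le> A" using TA True s by simp
    finally show ?thesis .
  next
    case False
    have "(LINT x:{s..1}|lborel. rearr \<Omega> g0 x powr p) = (LINT x:{s..1}|lborel. 0)"
      using z0 p0 False by (intro set_lebesgue_integral_cong) auto
    hence "gl_fun \<Omega> p \<alpha> g0 s = 0" unfolding gl_fun_def by simp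
    thus ?thesis using A0 by simp
  qed
  have g0GL: "g0 \<in> GL \<Omega> p \<alpha>" unfolding GL_def using g0m glb by (auto intro!: bdd_aboveI2[where M=A])
  have glA: "gl_norm \<Omega> p \<alpha> g0 \<le> A" unfolding gl_norm_def using glb by (intro cSUP_least) auto
  have g1i: "set_integrable lebesgue \<Omega> (\<lambda>z. \<bar>g1 z\<bar> powr q)"
  proof -
    have "(\<lambda>z. indicator \<Omega> z * g1 z) \<in> borel_measurable lebesgue" using meas_ind[OF g1m] .
    hence m: "(\<lambda>z. \<bar>indicator \<Omega> z * g1 z\<bar> powr q) \<in> borel_measurable lebesgue" by measurable
    have "(\<lambda>z. \<bar>indicator \<Omega> z * g1 z\<bar> powr q) = (\<lambda>z. indicator \<Omega> z *\<^sub>R (\<bar>g1 z\<bar> powr q))"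
      using q0 by (auto simp: indicator_def fun_eq_iff)
    with m have m2: "(\<lambda>z. indicator \<Omega> z *\<^sub>R (\<bar>g1 z\<bar> powr q)) \<in> borel_measurable lebesgue" by simp
    have fin: "emeasure lebesgue \<Omega> < \<infinity>" using \<Omega>1 by simp
    have bnd: "norm (indicator \<Omega> z *\<^sub>R (\<bar>g1 z\<bar> powr q)) \<le> l powr q" if "z \<in> \<Omega>" for z
      using that a1(2)[of z] q0 by (auto intro: powr_mono2)
    show ?thesis unfolding set_integrable_def
      by (rule integrableI_bounded_set[where A=\<Omega> and B="l powr q"]) (use m2 fin bnd \<Omega>m in auto)
  qed
  have g1L: "g1 \<in> Lq \<Omega> q" unfolding Lq_def using g1m g1i by auto
  define N where "N = Lq_norm \<Omega> q g1"
  have N0: "0 \<le> N" unfolding N_def Lq_norm_def by simp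
  have Nq: "N powr q \<le> \<phi> * l powr q + Y"
  proof -
    have iY: "set_integrable lborel {\<phi>..1} (\<lambda>x. rearr \<Omega> f x powr q)" using rint[OF fm \<phi>(1) q0] .
    have "ennreal (N powr q) = (\<integral>\<^sup>+z. ennreal (\<bar>g1 z\<bar> powr q) * indicator \<Omega> z \<partial>lebesgue)"
      unfolding N_def by (rule Lq_int[OF g1L q0])
    also have "\<dots> = (\<integral>\<^sup>+x. ennreal (rearr \<Omega> g1 x powr q) * indicator {0<..<1} x \<partial>lborel)"
      by (rule equimeas[OF g1m, of "\<lambda>y. ennreal (y powr q)"]) measurable
    also have "\<dots> \<le> (\<integral>\<^sup>+x. ennreal (l powr q) * indicator {0<..<\<phi>} x + ennreal (rearr \<Omega> f x powr q) * indicator {\<phi>..1} x \<partial>lborel)"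
    proof (rule nn_integral_mono)
      fix x
      show "ennreal (rearr \<Omega> g1 x powr q) * indicator {0<..<1} x
          \<le> ennreal (l powr q) * indicator {0<..<\<phi>} x + ennreal (rearr \<Omega> f x powr q) * indicator {\<phi>..1} x"
      proof (cases "x \<in> {0<..<1}")
        case True
        show ?thesis
        proof (cases "x < \<phi>")
          case True
          have "rearr \<Omega> g1 x \<le> l" using rearr_bound[OF g1m l0 a1(2)] \<open>x \<in> {0<..<1}\<close> by auto
          hence "rearr \<Omega> g1 x powr q \<le> l powr q"
            using rearr_nonneg[OF g1m] \<open>x \<in> {0<..<1}\<close> q0 by (intro powr_mono2) auto
          thus ?thesis using True \<open>x \<in> {0<..<1}\<close> by (auto simp: indicator_def)
        next
          case False
          have "rearr \<Omega> g1 x \<le> rearr \<Omega> f x" using rearr_mono[OF g1m fm _ a1(1)] \<open>x \<in> {0<..<1}\<close> by auto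
          hence "rearr \<Omega> g1 x powr q \<le> rearr \<Omega> f x powr q"
            using rearr_nonneg[OF g1m] \<open>x \<in> {0<..<1}\<close> q0 by (intro powr_mono2) auto
          thus ?thesis using False \<open>x \<in> {0<..<1}\<close> by (auto simp: indicator_def)
        qed
      qed simp
    qed
    also have "\<dots> = (\<integral>\<^sup>+x. ennreal (l powr q) * indicator {0<..<\<phi>} x \<partial>lborel) + (\<integral>\<^sup>+x. ennreal (rearr \<Omega> f x powr q) * indicator {\<phi>..1} x \<partial>lborel)"
      by (rule nn_integral_add) (use si_meas_nn[OF iY] in auto)
    also have "(\<integral>\<^sup>+x. ennreal (l powr q) * indicator {0<..<\<phi>} x \<partial>lborel) = ennreal (l powr q) * ennreal \<phi>"
      using \<phi> by (subst nn_integral_cmult_indicator) auto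
    also have "(\<integral>\<^sup>+x. ennreal (rearr \<Omega> f x powr q) * indicator {\<phi>..1} x \<partial>lborel) = ennreal Y"
      unfolding Y_def by (rule set_integral_nn[OF iY, symmetric]) simp
    also have "ennreal (l powr q) * ennreal \<phi> + ennreal Y = ennreal (\<phi> * l powr q + Y)"
      using \<phi> Y0 by (simp add: ennreal_mult[symmetric] mult.commute ennreal_plus)
    finally show ?thesis using \<phi> Y0 by (subst (asm) ennreal_le_iff) auto
  qed
  have Nb: "N \<le> 2 * (\<phi> powr (1/q) * l + Y powr (1/q))"
  proof -
    have "N = (N powr q) powr (1/q)" using N0 q0 by (simp add: powr_powr)
    also have "\<dots> \<le> (\<phi> * l powr q + Y) powr (1/q)" using Nq q0 by (intro powr_mono2) auto
    also have "\<dots> \<le> 2 * ((\<phi> * l powr q) powr (1/q) + Y powr (1/q))"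
      using \<phi> Y0 q1 by (intro root_sum) auto
    also have "(\<phi> * l powr q) powr (1/q) = \<phi> powr (1/q) * l"
      using l0 q0 by (simp add: powr_mult powr_powr)
    finally show ?thesis .
  qed
  define D where "D = 2 powr (1/p) * (1 + ln 2) powr (\<alpha>/p)"
  have D0: "0 \<le> D" unfolding D_def by simp
  have tl: "t * (\<phi> powr (1/q) * l) \<le> D * A"
  proof -
    define L2 where "L2 = 1 - ln (\<phi>/2)"
    have L2: "0 < L2" unfolding L2_def using ln_pos1[of "\<phi>/2"] \<phi> by simp
    have Lp: "0 < 1 - ln \<phi>" using ln_pos1[of \<phi>] \<phi> by simp
    have I: "(\<phi>/2) * l powr p \<le> (LINT x:{\<phi>/2..\<phi>}|lborel. rearr \<Omega> f x powr p)"
    proof -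
      have "(\<phi>/2) * l powr p = (LINT x:{\<phi>/2..\<phi>}|lborel. l powr p)" using \<phi> by (subst si_const) auto
      also have "\<dots> \<le> (LINT x:{\<phi>/2..\<phi>}|lborel. rearr \<Omega> f x powr p)"
      proof (rule si_mono)
        show "set_integrable lborel {\<phi>/2..\<phi>} (\<lambda>x. l powr p)"
          by (intro borel_integrable_atLeastAtMost') (intro continuous_intros)
        show "set_integrable lborel {\<phi>/2..\<phi>} (\<lambda>x. rearr \<Omega> f x powr p)" using \<phi> p0 by (intro rint[OF fm]) auto
        fix x assume x: "\<phi>/2 \<le> x" "x \<le> \<phi>"
        thus "l powr p \<le> rearr \<Omega> f x powr p"
          unfolding l_def using \<phi> p0 l0[unfolded l_def] by (intro powr_mono2 rearr_anti[OF fm]) auto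
      qed
      finally show ?thesis .
    qed
    have Tphi: "L2 powr (-\<alpha>/p) * ((\<phi>/2) powr (1/p) * l) \<le> T (\<phi>/2)"
    proof -
      have m: "((\<phi>/2) * l powr p) powr (1/p) = (\<phi>/2) powr (1/p) * (l powr p) powr (1/p)" by (rule powr_mult)
      have "(l powr p) powr (1/p) = l" using l0 p0 by (simp add: powr_powr)
      hence "(\<phi>/2) powr (1/p) * l = ((\<phi>/2) * l powr p) powr (1/p)" unfolding m by simp
      also have "\<dots> \<le> (LINT x:{\<phi>/2..\<phi>}|lborel. rearr \<Omega> f x powr p) powr (1/p)"
        using I \<phi> p0 by (intro powr_mono2) auto
      finally show ?thesis unfolding T_def L2_def by (intro mult_left_mono) auto
    qed
    have c1: "t * \<phi> powr (1/q) = \<phi> powr (1/p) * (1 - ln \<phi>) powr (-\<alpha>/p)"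
      unfolding t by (simp add: powr_add[symmetric] algebra_simps)
    have c2: "\<phi> powr (1/p) = 2 powr (1/p) * (\<phi>/2) powr (1/p)" using \<phi> by (simp add: powr_divide)
    have c3: "(1 - ln \<phi>) powr (-\<alpha>/p) \<le> (1 + ln 2) powr (\<alpha>/p) * L2 powr (-\<alpha>/p)"
    proof -
      have "L2 \<le> (1 + ln 2) * (1 - ln \<phi>)" unfolding L2_def using ln_half_bound[of \<phi> 2] \<phi> by simp
      hence "((1 + ln 2) * (1 - ln \<phi>)) powr (-\<alpha>/p) \<le> L2 powr (-\<alpha>/p)"
        using L2 al p0 by (intro powr_mono2') auto
      hence "(1 + ln 2) powr (-\<alpha>/p) * (1 - ln \<phi>) powr (-\<alpha>/p) \<le> L2 powr (-\<alpha>/p)" by (simp add: powr_mult)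
      hence "(1 + ln 2) powr (\<alpha>/p) * ((1 + ln 2) powr (-\<alpha>/p) * (1 - ln \<phi>) powr (-\<alpha>/p)) \<le> (1 + ln 2) powr (\<alpha>/p) * L2 powr (-\<alpha>/p)"
        by (intro mult_left_mono) auto
      moreover have "(1 + ln 2) powr (\<alpha>/p) * (1 + ln 2) powr (-\<alpha>/p) = 1"
      proof -
        have "0 \<le> ln (2::real)" by simp
        hence "0 < 1 + ln (2::real)" by linarith
        thus ?thesis by (simp add: powr_add[symmetric])
      qed
      ultimately show ?thesis by (simp add: mult.assoc[symmetric])
    qed
    have "t * (\<phi> powr (1/q) * l) = \<phi> powr (1/p) * (1 - ln \<phi>) powr (-\<alpha>/p) * l" using c1 by (simp add: mult.assoc[symmetric])
    also have "\<dots> = 2 powr (1/p) * (1 - ln \<phi>) powr (-\<alpha>/p) * ((\<phi>/2) powr (1/p) * l)" unfolding c2 by (simp add: algebra_simps)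
    also have "\<dots> \<le> 2 powr (1/p) * ((1 + ln 2) powr (\<alpha>/p) * L2 powr (-\<alpha>/p)) * ((\<phi>/2) powr (1/p) * l)"
      using c3 l0 by (intro mult_right_mono mult_left_mono) auto
    also have "\<dots> = D * (L2 powr (-\<alpha>/p) * ((\<phi>/2) powr (1/p) * l))" unfolding D_def by (simp add: algebra_simps)
    also have "\<dots> \<le> D * T (\<phi>/2)" using Tphi D0 by (intro mult_left_mono) auto
    also have "\<dots> \<le> D * A" using TA[of "\<phi>/2"] \<phi> D0 by (intro mult_left_mono) auto
    finally show ?thesis .
  qed
  have dec: "(g0, g1) \<in> decomps \<Omega> p \<alpha> q f" unfolding decomps_def using g0GL g1L eqf by auto
  have bb: "bdd_below ((\<lambda>g. gl_norm \<Omega> p \<alpha> (fst g) + t * Lq_norm \<Omega> q (snd g)) ` decomps \<Omega> p \<alpha> q f)"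
  proof (rule bdd_belowI2[where m=0])
    fix g assume "g \<in> decomps \<Omega> p \<alpha> q f"
    hence "fst g \<in> GL \<Omega> p \<alpha>" unfolding decomps_def by auto
    thus "0 \<le> gl_norm \<Omega> p \<alpha> (fst g) + t * Lq_norm \<Omega> q (snd g)"
      using gl_norm_nonneg t0 by (intro add_nonneg_nonneg mult_nonneg_nonneg) (auto simp: Lq_norm_def)
  qed
  have "Kfun \<Omega> p \<alpha> q f t \<le> gl_norm \<Omega> p \<alpha> g0 + t * N"
    unfolding Kfun_def N_def using cINF_lower[OF bb dec] by simp
  also have "\<dots> \<le> A + t * (2 * (\<phi> powr (1/q) * l + Y powr (1/q)))"
    using glA Nb t0 by (intro add_mono mult_left_mono) auto
  also have "\<dots> = A + 2 * (t * (\<phi> powr (1/q) * l)) + 2 * (t * Y powr (1/q))" by (simp add: algebra_simps)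
  also have "\<dots> \<le> A + 2 * (D * A) + 2 * (t * Y powr (1/q))" using tl by simp
  also have "\<dots> \<le> CU p \<alpha> * (A + t * Y powr (1/q))"
    unfolding CU_def D_def[symmetric] using A0 D0 t0 by (simp add: algebra_simps)
  finally show ?thesis unfolding A_def Y_def T_def .
qed

end

theorem theorem3p2:
  fixes \<Omega> :: "'a::euclidean_space set" and p q \<alpha> :: real
  assumes "bounded \<Omega>" and "open \<Omega>" and "emeasure lebesgue \<Omega> = 1"
    and "1 < p" and "p < q" and "0 < \<alpha>"
  shows "\<exists>c>0. \<forall>f\<in>GL_plus_Lq \<Omega> p \<alpha> q. \<forall>t\<in>{0<..<1::real}.
     (let R = (SUP s\<in>{0<..<phi p q \<alpha> t}. (1 - ln s) powr (- \<alpha> / p) *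
                 (LINT x:{s..phi p q \<alpha> t}|lborel. rearr \<Omega> f x powr p) powr (1 / p))
              + t * (LINT x:{phi p q \<alpha> t..1}|lborel. rearr \<Omega> f x powr q) powr (1 / q)
      in Kfun \<Omega> p \<alpha> q f t \<le> c * R \<and> R \<le> c * Kfun \<Omega> p \<alpha> q f t)"
proof -
  note p = \<open>1 < p\<close> and pq = \<open>p < q\<close> and al = \<open>0 < \<alpha>\<close>
  have \<Omega>m: "\<Omega> \<in> sets lebesgue" using \<open>open \<Omega>\<close> by simp
  interpret om \<Omega> by unfold_locales (use \<Omega>m \<open>emeasure lebesgue \<Omega> = 1\<close> in auto)
  have a: "0 < 1/p - 1/q" using p pq by (simp add: frac_less2)
  have b: "0 < \<alpha>/p" using p al by simp
  define c where "c = max (CU p \<alpha>) (CA p q \<alpha> + CB p q \<alpha>)"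
  have CU3: "3 \<le> CU p \<alpha>" unfolding CU_def by simp
  have CAB: "0 \<le> CA p q \<alpha> + CB p q \<alpha>" unfolding CA_def CB_def by simp
  have c0: "0 < c" unfolding c_def using CU3 by simp
  show ?thesis
  proof (intro exI[of _ c] conjI c0 ballI)
    fix f t assume f: "f \<in> GL_plus_Lq \<Omega> p \<alpha> q" and t: "t \<in> {0<..<1::real}"
    define \<phi> where "\<phi> = phi p q \<alpha> t"
    have \<phi>: "0 < \<phi>" "\<phi> < 1" and ps: "psi p q \<alpha> \<phi> = t"
      using phi_props[OF a b, of t] t unfolding \<phi>_def by auto
    have teq: "t = \<phi> powr (1/p-1/q) * (1 - ln \<phi>) powr (-\<alpha>/p)" using ps unfolding psi_def by simp
    have t0: "0 < t" using t by simp
    define T where "T = (\<lambda>s. (1 - ln s) powr (- \<alpha> / p) * (LINT x:{s..\<phi>}|lborel. rearr \<Omega> f x powr p) powr (1 / p))"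
    define B where "B = (LINT x:{\<phi>..1}|lborel. rearr \<Omega> f x powr q) powr (1 / q)"
    define D where "D = decomps \<Omega> p \<alpha> q f"
    define V where "V = (\<lambda>g. gl_norm \<Omega> p \<alpha> (fst g) + t * Lq_norm \<Omega> q (snd g))"
    have Dne: "D \<noteq> {}" using f unfolding GL_plus_Lq_def D_def by simp
    then obtain g0 g1 where g01: "(g0, g1) \<in> D" by auto
    have g0: "g0 \<in> GL \<Omega> p \<alpha>" and g1: "g1 \<in> Lq \<Omega> q" and eq0: "\<And>z. z \<in> \<Omega> \<Longrightarrow> f z = g0 z + g1 z"
      using g01 unfolding D_def decomps_def by auto
    have fm: "meas_on \<Omega> f"
    proof -
      have "g0 \<in> borel_measurable (restrict_space lebesgue \<Omega>)" using GL_meas[OF g0] meas_on_iff by blast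
      moreover have "g1 \<in> borel_measurable (restrict_space lebesgue \<Omega>)" using g1 meas_on_iff unfolding Lq_def by blast
      ultimately have "(\<lambda>z. g0 z + g1 z) \<in> borel_measurable (restrict_space lebesgue \<Omega>)" by measurable
      moreover have "(\<lambda>z. g0 z + g1 z) \<in> borel_measurable (restrict_space lebesgue \<Omega>) \<longleftrightarrow> f \<in> borel_measurable (restrict_space lebesgue \<Omega>)"
        by (rule measurable_cong) (use eq0 in \<open>simp add: space_restrict_space\<close>)
      ultimately have "f \<in> borel_measurable (restrict_space lebesgue \<Omega>)" by simp
      thus ?thesis using meas_on_iff by blast
    qed
    have V0: "0 \<le> V g" if "g \<in> D" for g
    proof -
      have "fst g \<in> GL \<Omega> p \<alpha>" using that unfolding D_def decomps_def by auto
      thus ?thesis unfolding V_def using gl_norm_nonneg t0 by (intro add_nonneg_nonneg mult_nonneg_nonneg) (auto simp: Lq_norm_def)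
    qed
    have LA: "T s \<le> CA p q \<alpha> * V g" if "g \<in> D" "s \<in> {0<..<\<phi>}" for g s
    proof -
      obtain h0 h1 where g: "g = (h0, h1)" by (cases g)
      have h0: "h0 \<in> GL \<Omega> p \<alpha>" and h1: "h1 \<in> Lq \<Omega> q" and eqh: "\<And>z. z \<in> \<Omega> \<Longrightarrow> f z = h0 z + h1 z"
        using that(1) unfolding g D_def decomps_def by auto
      show ?thesis unfolding T_def V_def g fst_conv snd_conv
        using lower_A[OF p pq al h0 h1 fm eqh \<phi> teq] that(2) by simp
    qed
    have LB: "t * B \<le> CB p q \<alpha> * V g" if "g \<in> D" for g
    proof -
      obtain h0 h1 where g: "g = (h0, h1)" by (cases g)
      have h0: "h0 \<in> GL \<Omega> p \<alpha>" and h1: "h1 \<in> Lq \<Omega> q" and eqh: "\<And>z. z \<in> \<Omega> \<Longrightarrow> f z = h0 z + h1 z"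
        using that(1) unfolding g D_def decomps_def by auto
      show ?thesis unfolding B_def V_def g fst_conv snd_conv
        using lower_B[OF p pq al h0 h1 fm eqh \<phi> teq] by simp
    qed
    have bddT: "bdd_above (T ` {0<..<\<phi>})"
      using LA[OF g01] by (intro bdd_aboveI2[where M="CA p q \<alpha> * V (g0, g1)"]) auto
    define R where "R = (SUP s\<in>{0<..<\<phi>}. T s) + t * B"
    have T0: "0 \<le> T s" for s unfolding T_def by simp
    have R0: "0 \<le> R"
    proof -
      have "T (\<phi>/2) \<le> (SUP s\<in>{0<..<\<phi>}. T s)" using bddT \<phi> by (intro cSUP_upper) auto
      thus ?thesis unfolding R_def B_def using T0[of "\<phi>/2"] t0 by simp
    qed
    have K: "Kfun \<Omega> p \<alpha> q f t = (INF g\<in>D. V g)" unfolding Kfun_def D_def V_def ..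
    have K0: "0 \<le> Kfun \<Omega> p \<alpha> q f t" unfolding K using Dne V0 by (intro cINF_greatest) auto
    have RV: "R \<le> (CA p q \<alpha> + CB p q \<alpha>) * V g" if "g \<in> D" for g
    proof -
      have "(SUP s\<in>{0<..<\<phi>}. T s) \<le> CA p q \<alpha> * V g" using LA[OF that] \<phi> by (intro cSUP_least) auto
      thus ?thesis unfolding R_def using LB[OF that] by (simp add: algebra_simps)
    qed
    have RK: "R \<le> (CA p q \<alpha> + CB p q \<alpha>) * Kfun \<Omega> p \<alpha> q f t"
    proof (cases "CA p q \<alpha> + CB p q \<alpha> = 0")
      case True
      thus ?thesis using RV[OF g01] by simp
    next
      case False
      hence pos: "0 < CA p q \<alpha> + CB p q \<alpha>" using CAB by simp
      have "R / (CA p q \<alpha> + CB p q \<alpha>) \<le> (INF g\<in>D. V g)"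
        using Dne RV pos by (intro cINF_greatest) (auto simp: divide_le_eq mult.commute)
      thus ?thesis unfolding K using pos by (simp add: divide_le_eq mult.commute)
    qed
    have KU: "Kfun \<Omega> p \<alpha> q f t \<le> CU p \<alpha> * R"
      unfolding R_def T_def B_def \<phi>_def using upper[OF p pq al fm \<phi> teq bddT[unfolded T_def]] unfolding \<phi>_def by simp
    have "Kfun \<Omega> p \<alpha> q f t \<le> c * R"
      using order_trans[OF KU mult_right_mono[OF max.cobounded1 R0]] unfolding c_def .
    moreover have "R \<le> c * Kfun \<Omega> p \<alpha> q f t"
      using order_trans[OF RK mult_right_mono[OF max.cobounded2 K0]] unfolding c_def .
    ultimately show "let R = (SUP s\<in>{0<..<phi p q \<alpha> t}. (1 - ln s) powr (- \<alpha> / p) *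
                 (LINT x:{s..phi p q \<alpha> t}|lborel. rearr \<Omega> f x powr p) powr (1 / p))
              + t * (LINT x:{phi p q \<alpha> t..1}|lborel. rearr \<Omega> f x powr q) powr (1 / q)
      in Kfun \<Omega> p \<alpha> q f t \<le> c * R \<and> R \<le> c * Kfun \<Omega> p \<alpha> q f t"
      unfolding R_def T_def B_def \<phi>_def Let_def by simp
  qed
qed

end
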